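(* Let $\Sigma$ be a ranked set and $L\subseteq\mathsf{H}_0\Sigma$. The following are equivalent: (1) $L$ is recognised by an $\mathsf{H}$-algebra that is finite on every arity; (2) $L$ is recognised by (i.e. is a union of classes of) a congruence of the algebra $\mathsf{H}\Sigma$ with finitely many equivalence classes on every arity; (3) $L$ is recognised by an equivalence relation on $\mathsf{H}\Sigma$ that is compatible with all HR-operations and has finitely many equivalence classes on every arity.
   Context: A ranked set is a set in which each element has an arity in $\{0,1,2,\dots\}$; morphisms are arity-preserving functions. A sourced hypergraph of arity $n$ over $\Sigma$: finite vertex set, finite ranked set of hyperedges labelled arity-preservingly by $\Sigma$, incidence mapping each $m$-ary hyperedge $e$ to a non-repeating list $e[1],\dots,e[m]$ of vertices, injective source function $\{1,\dots,n\}\to$ vertices. $\mathsf{H}\Sigma$: such objects up to isomorphism; $\mathsf{H}_0\Sigma$: the arity-0 ones. Unit of $n$-ary $a$: vertices $1..n$ (identity sources), one hyperedge labelled $a$ with incidence $[1,\dots,n]$. Flattening of $G\in\mathsf{H}\mathsf{H}\Sigma$: hyperedges are pairs $(e,f)$ with $e$ a hyperedge of $G$ and $f$ a hyperedge of the label of $e$ (label from $f$); vertices are vertices of $G$ and pairs $(e,v)$ with $v$ a non-source vertex of the label of $e$; sources from $G$; the incidence of $(e,f)$ is that of $f$ with $v\mapsto(e,v)$ for non-sources and $v\mapsto e[i]$ if $v$ is the $i$-th source of the label of $e$. An $\mathsf{H}$-algebra is a ranked set $A$ with arity-preserving $\pi:\mathsf{H}A\to A$ such that $\pi(\mathrm{unit}\,a)=a$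 and $\pi\circ\mathsf{H}\pi=\pi\circ\mathrm{flatten}$ (with $\mathsf{H}\pi$ acting by relabelling); homomorphisms $h$ satisfy $h\circ\pi_A=\pi_B\circ\mathsf{H}h$. $\mathsf{H}\Sigma$ is an algebra with flattening as product. $L$ is recognised by $\mathcal{A}$ if $L=h^{-1}(F)\cap\mathsf{H}_0\Sigma$ for some homomorphism $h:\mathsf{H}\Sigma\to\mathcal{A}$ and set $F$. For a ranked set $X$ of variables and $t\in\mathsf{H}(\mathsf{H}\Sigma+X)$, the polynomial operation $(\mathsf{H}\Sigma)^X\to\mathsf{H}\Sigma$ maps an arity-preserving valuation $\eta$ to the flattening of $t$ with every label $x\in X$ replaced by $\eta(x)$. An equivalence relation on $\mathsf{H}\Sigma$ is compatible with an operation if componentwise equivalent inputs give equivalent outputs; a congruence is an equivalence relation compatible with all polynomial operations. The HR-operations are: for each $n$, parallel composition of two $n$-ary sourced hypergraphs (disjoint union with corresponding sources fused); for each $n$, the operation adding a new isolated vertex that becomes source $n+1$; a constant for the empty hypergraph (arity 0) and a constant for the unit of each $a\in\Sigma$; for each injective $f:\{1,\dots,k\}\to\{1,\dots,n\}$, the operation mapping an $n$-ary sourced hypergraph to the $k$-ary one whose source function is the old source function composed with $f$. *)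

theory Defs
  imports Main "HOL-Library.Nat_Bijection"
begin

(* The sources are a distinct list (position i-1 = i-th source), so the arity
   is the length of that list.  Elements of H Sigma are isomorphism classes;
   we work with concrete representatives and isomorphism-invariant notions. *)
record 'l shg =
  hV :: "nat set"
  hE :: "nat set"
  hlab :: "nat \<Rightarrow> 'l"
  hinc :: "nat \<Rightarrow> nat list"
  hsrc :: "nat list"

definition hg_ar :: "'l shg \<Rightarrow> nat" where
  "hg_ar G = length (hsrc G)"

definition wf_hg :: "'l set \<Rightarrow> ('l \<Rightarrow> nat) \<Rightarrow> 'l shg \<Rightarrow> bool" where
  "wf_hg C ar G \<longleftrightarrow> finite (hV G) \<and> finite (hE G) \<and> distinct (hsrc G) \<and> set (hsrc G) \<subseteq> hV G \<and>
     (\<forall>e\<in>hE G. hlab G e \<in> C \<and> distinct (hinc G e) \<and> set (hinc G e) \<subseteq> hV G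
                 \<and> length (hinc G e) = ar (hlab G e))"

definition hg_iso :: "'l shg \<Rightarrow> 'l shg \<Rightarrow> bool" where
  "hg_iso G G' \<longleftrightarrow> (\<exists>\<phi> \<psi>. bij_betw \<phi> (hV G) (hV G') \<and> bij_betw \<psi> (hE G) (hE G') \<and>
     (\<forall>e\<in>hE G. hlab G' (\<psi> e) = hlab G e \<and> hinc G' (\<psi> e) = map \<phi> (hinc G e)) \<and>
     hsrc G' = map \<phi> (hsrc G))"

definition HH :: "'s set \<Rightarrow> ('s \<Rightarrow> nat) \<Rightarrow> 's shg set" where
  "HH S ar = {G. wf_hg S ar G}"

definition hg_unit :: "('l \<Rightarrow> nat) \<Rightarrow> 'l \<Rightarrow> 'l shg" where
  "hg_unit ar a = \<lparr>hV = {..<ar a}, hE = {0}, hlab = (\<lambda>_. a), hinc = (\<lambda>_. [0..<ar a]),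
                   hsrc = [0..<ar a]\<rparr>"

definition relabel :: "('l \<Rightarrow> 'm) \<Rightarrow> 'l shg \<Rightarrow> 'm shg" where
  "relabel f G = \<lparr>hV = hV G, hE = hE G, hlab = f \<circ> hlab G, hinc = hinc G, hsrc = hsrc G\<rparr>"

definition vL :: "nat \<Rightarrow> nat" where "vL v = sum_encode (Inl v)"
definition vR :: "nat \<Rightarrow> nat \<Rightarrow> nat" where "vR e v = sum_encode (Inr (prod_encode (e, v)))"

definition src_index :: "nat list \<Rightarrow> nat \<Rightarrow> nat" where
  "src_index s v = (THE i. i < length s \<and> s ! i = v)"

definition fl_vmap :: "'l shg shg \<Rightarrow> nat \<Rightarrow> nat \<Rightarrow> nat" where
  "fl_vmap G e v = (if v \<in> set (hsrc (hlab G e))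
                    then vL (hinc G e ! src_index (hsrc (hlab G e)) v) else vR e v)"

(* flattening; vertex (e,v) encoded as vR e v, old vertex v as vL v,
   hyperedge (e,f) encoded as prod_encode (e,f) *)
definition flatten :: "'l shg shg \<Rightarrow> 'l shg" where
  "flatten G = \<lparr>hV = vL ` hV G \<union> {vR e v | e v. e \<in> hE G \<and> v \<in> hV (hlab G e) - set (hsrc (hlab G e))},
     hE = {prod_encode (e, f) | e f. e \<in> hE G \<and> f \<in> hE (hlab G e)},
     hlab = (\<lambda>x. case prod_decode x of (e, f) \<Rightarrow> hlab (hlab G e) f),
     hinc = (\<lambda>x. case prod_decode x of (e, f) \<Rightarrow> map (fl_vmap G e) (hinc (hlab G e) f)),
     hsrc = map vL (hsrc G)\<rparr>"

(* H-algebra with carrier A, arity arA and product \<pi> (defined on representatives,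
   required to be isomorphism invariant) *)
definition H_algebra :: "'a set \<Rightarrow> ('a \<Rightarrow> nat) \<Rightarrow> ('a shg \<Rightarrow> 'a) \<Rightarrow> bool" where
  "H_algebra A arA \<pi> \<longleftrightarrow>
     (\<forall>G. wf_hg A arA G \<longrightarrow> \<pi> G \<in> A \<and> arA (\<pi> G) = hg_ar G) \<and>
     (\<forall>G G'. wf_hg A arA G \<longrightarrow> hg_iso G G' \<longrightarrow> \<pi> G = \<pi> G') \<and>
     (\<forall>a\<in>A. \<pi> (hg_unit arA a) = a) \<and>
     (\<forall>G. wf_hg (HH A arA) hg_ar G \<longrightarrow> \<pi> (relabel \<pi> G) = \<pi> (flatten G))"

definition finite_per_arity :: "'a set \<Rightarrow> ('a \<Rightarrow> nat) \<Rightarrow> bool" where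
  "finite_per_arity A arA \<longleftrightarrow> (\<forall>n. finite {a\<in>A. arA a = n})"

(* homomorphism from the free algebra H Sigma (product = flatten) to (A, arA, \<pi>) *)
definition H_hom :: "'s set \<Rightarrow> ('s \<Rightarrow> nat) \<Rightarrow> 'a set \<Rightarrow> ('a \<Rightarrow> nat) \<Rightarrow> ('a shg \<Rightarrow> 'a)
                      \<Rightarrow> ('s shg \<Rightarrow> 'a) \<Rightarrow> bool" where
  "H_hom S ar A arA \<pi> h \<longleftrightarrow>
     (\<forall>G\<in>HH S ar. h G \<in> A \<and> arA (h G) = hg_ar G) \<and>
     (\<forall>G\<in>HH S ar. \<forall>G'. hg_iso G G' \<longrightarrow> h G = h G') \<and>
     (\<forall>G. wf_hg (HH S ar) hg_ar G \<longrightarrow> h (flatten G) = \<pi> (relabel h G))"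

definition recognised_by_alg :: "'s set \<Rightarrow> ('s \<Rightarrow> nat) \<Rightarrow> 's shg set \<Rightarrow> 'a set \<Rightarrow> ('a \<Rightarrow> nat)
                                  \<Rightarrow> ('a shg \<Rightarrow> 'a) \<Rightarrow> bool" where
  "recognised_by_alg S ar L A arA \<pi> \<longleftrightarrow>
     (\<exists>h F. H_hom S ar A arA \<pi> h \<and> L = {G \<in> HH S ar. hg_ar G = 0 \<and> h G \<in> F})"

(* equivalence relation on the ranked set H Sigma: an arity preserving equivalence on
   representatives that identifies isomorphic hypergraphs *)
definition ranked_equiv :: "'s set \<Rightarrow> ('s \<Rightarrow> nat) \<Rightarrow> ('s shg \<times> 's shg) set \<Rightarrow> bool" where
  "ranked_equiv S ar R \<longleftrightarrow> equiv (HH S ar) R \<and>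
     (\<forall>G\<in>HH S ar. \<forall>G'. hg_iso G G' \<longrightarrow> (G, G') \<in> R) \<and>
     (\<forall>G G'. (G, G') \<in> R \<longrightarrow> hg_ar G = hg_ar G')"

definition finite_index :: "'s set \<Rightarrow> ('s \<Rightarrow> nat) \<Rightarrow> ('s shg \<times> 's shg) set \<Rightarrow> bool" where
  "finite_index S ar R \<longleftrightarrow> (\<forall>n. finite ({G \<in> HH S ar. hg_ar G = n} // R))"

definition rel_recognises :: "'s shg set \<Rightarrow> ('s shg \<times> 's shg) set \<Rightarrow> bool" where
  "rel_recognises L R \<longleftrightarrow> (\<forall>G G'. (G, G') \<in> R \<longrightarrow> G \<in> L \<longrightarrow> G' \<in> L)"

(* polynomial operations; variables are natural numbers with arity arX *)
definition poly_op :: "('s shg + nat) shg \<Rightarrow> (nat \<Rightarrow> 's shg) \<Rightarrow> 's shg" where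
  "poly_op t \<eta> = flatten (relabel (case_sum id \<eta>) t)"

definition valuation :: "'s set \<Rightarrow> ('s \<Rightarrow> nat) \<Rightarrow> (nat \<Rightarrow> nat) \<Rightarrow> (nat \<Rightarrow> 's shg) \<Rightarrow> bool" where
  "valuation S ar arX \<eta> \<longleftrightarrow> (\<forall>x. \<eta> x \<in> HH S ar \<and> hg_ar (\<eta> x) = arX x)"

definition congruence :: "'s set \<Rightarrow> ('s \<Rightarrow> nat) \<Rightarrow> ('s shg \<times> 's shg) set \<Rightarrow> bool" where
  "congruence S ar R \<longleftrightarrow> ranked_equiv S ar R \<and>
     (\<forall>arX t \<eta> \<eta>'. wf_hg (HH S ar <+> UNIV) (case_sum hg_ar arX) t \<longrightarrow>
        valuation S ar arX \<eta> \<longrightarrow> valuation S ar arX \<eta>' \<longrightarrow> (\<forall>x. (\<eta> x, \<eta>' x) \<in> R) \<longrightarrow>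
        (poly_op t \<eta>, poly_op t \<eta>') \<in> R)"

definition par_vmap :: "'l shg \<Rightarrow> 'l shg \<Rightarrow> nat \<Rightarrow> nat" where
  "par_vmap G H v = (if v \<in> set (hsrc H) then vL (hsrc G ! src_index (hsrc H) v)
                     else sum_encode (Inr v))"

definition hg_par :: "'l shg \<Rightarrow> 'l shg \<Rightarrow> 'l shg" where
  "hg_par G H = \<lparr>hV = vL ` hV G \<union> (\<lambda>v. sum_encode (Inr v)) ` (hV H - set (hsrc H)),
     hE = (\<lambda>e. sum_encode (Inl e)) ` hE G \<union> (\<lambda>e. sum_encode (Inr e)) ` hE H,
     hlab = (\<lambda>x. case sum_decode x of Inl e \<Rightarrow> hlab G e | Inr e \<Rightarrow> hlab H e),
     hinc = (\<lambda>x. case sum_decode x of Inl e \<Rightarrow> map vL (hinc G e)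
                                   | Inr e \<Rightarrow> map (par_vmap G H) (hinc H e)),
     hsrc = map vL (hsrc G)\<rparr>"

definition hg_addv :: "'l shg \<Rightarrow> 'l shg" where
  "hg_addv G = \<lparr>hV = vL ` hV G \<union> {sum_encode (Inr 0)}, hE = hE G, hlab = hlab G,
     hinc = (\<lambda>e. map vL (hinc G e)), hsrc = map vL (hsrc G) @ [sum_encode (Inr 0)]\<rparr>"

definition hg_empty :: "'l shg" where
  "hg_empty = \<lparr>hV = {}, hE = {}, hlab = (\<lambda>_. undefined), hinc = (\<lambda>_. []), hsrc = []\<rparr>"

(* source renaming along an injective f : {1..k} -> {1..n}, given as the distinct
   list fs = [f 1 - 1, ..., f k - 1] of 0-based positions *)
definition hg_restrict :: "nat list \<Rightarrow> 'l shg \<Rightarrow> 'l shg" where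
  "hg_restrict fs G = G\<lparr>hsrc := map (\<lambda>i. hsrc G ! i) fs\<rparr>"

definition HR_compatible :: "'s set \<Rightarrow> ('s \<Rightarrow> nat) \<Rightarrow> ('s shg \<times> 's shg) set \<Rightarrow> bool" where
  "HR_compatible S ar R \<longleftrightarrow>
     (\<forall>G G' H H'. (G, G') \<in> R \<longrightarrow> (H, H') \<in> R \<longrightarrow> hg_ar G = hg_ar H \<longrightarrow>
        (hg_par G H, hg_par G' H') \<in> R) \<and>
     (\<forall>G G'. (G, G') \<in> R \<longrightarrow> (hg_addv G, hg_addv G') \<in> R) \<and>
     (hg_empty, hg_empty) \<in> R \<and>
     (\<forall>a\<in>S. (hg_unit ar a, hg_unit ar a) \<in> R) \<and>
     (\<forall>G G' fs. (G, G') \<in> R \<longrightarrow> distinct fs \<longrightarrow> set fs \<subseteq> {..<hg_ar G} \<longrightarrow>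
        (hg_restrict fs G, hg_restrict fs G') \<in> R)"

end

theory Submission
  imports Defs
begin


lemma vL_inj[simp]: "vL a = vL b \<longleftrightarrow> a = b"
  by (simp add: vL_def sum_encode_eq)
lemma vR_inj[simp]: "vR e a = vR f b \<longleftrightarrow> e = f \<and> a = b"
  by (simp add: vR_def sum_encode_eq prod_encode_eq)
lemma vL_vR[simp]: "vL a \<noteq> vR e b" "vR e b \<noteq> vL a"
  by (simp_all add: vL_def vR_def sum_encode_eq)
lemma vL_Inr[simp]: "vL a \<noteq> sum_encode (Inr b)" "sum_encode (Inr b) \<noteq> vL a"
  by (simp_all add: vL_def sum_encode_eq)
lemma dec_vL[simp]: "sum_decode (vL a) = Inl a" by (simp add: vL_def)
lemma dec_vR[simp]: "sum_decode (vR e a) = Inr (prod_encode (e, a))" by (simp add: vR_def)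

lemma src_index_eq: "distinct s \<Longrightarrow> i < length s \<Longrightarrow> s ! i = v \<Longrightarrow> src_index s v = i"
  unfolding src_index_def by (rule the_equality) (auto simp: nth_eq_iff_index_eq)
lemma src_index: "distinct s \<Longrightarrow> v \<in> set s \<Longrightarrow> src_index s v < length s \<and> s ! src_index s v = v"
  by (metis in_set_conv_nth src_index_eq)
lemma src_index_app: "distinct (s @ t) \<Longrightarrow> v \<in> set s \<Longrightarrow> src_index (s @ t) v = src_index s v"
  by (metis distinct_append nth_append_left src_index src_index_eq length_append trans_less_add1)
lemma src_index_map: "inj_on f (set s) \<Longrightarrow> distinct s \<Longrightarrow> v \<in> set s \<Longrightarrow> src_index (map f s) (f v) = src_index s v"
  by (metis distinct_map length_map nth_map src_index src_index_eq)
lemma src_index_nth: "distinct s \<Longrightarrow> i < length s \<Longrightarrow> src_index s (s ! i) = i"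
  by (simp add: src_index_eq)

lemma iso_refl: "hg_iso G G"
  unfolding hg_iso_def by (rule exI[of _ id], rule exI[of _ id]) (simp add: bij_betw_id)

lemma iso_id: "hV G' = hV G \<Longrightarrow> hE G' = hE G \<Longrightarrow> hsrc G' = hsrc G \<Longrightarrow>
  (\<And>e. e \<in> hE G \<Longrightarrow> hlab G' e = hlab G e \<and> hinc G' e = hinc G e) \<Longrightarrow> hg_iso G G'"
  unfolding hg_iso_def by (rule exI[of _ id], rule exI[of _ id]) (simp add: bij_betw_id)

lemma iso_sym: assumes "wf_hg C ar G" "hg_iso G G'" shows "hg_iso G' G"
proof -
  from assms(2) obtain \<phi> \<psi> where b1: "bij_betw \<phi> (hV G) (hV G')" and b2: "bij_betw \<psi> (hE G) (hE G')"
    and l: "\<forall>e\<in>hE G. hlab G' (\<psi> e) = hlab G e \<and> hinc G' (\<psi> e) = map \<phi> (hinc G e)"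
    and s: "hsrc G' = map \<phi> (hsrc G)" unfolding hg_iso_def by blast
  define \<phi>' where "\<phi>' = inv_into (hV G) \<phi>"
  define \<psi>' where "\<psi>' = inv_into (hE G) \<psi>"
  have b1': "bij_betw \<phi>' (hV G') (hV G)" unfolding \<phi>'_def by (rule bij_betw_inv_into[OF b1])
  have b2': "bij_betw \<psi>' (hE G') (hE G)" unfolding \<psi>'_def by (rule bij_betw_inv_into[OF b2])
  have inv1: "\<And>v. v \<in> hV G \<Longrightarrow> \<phi>' (\<phi> v) = v" unfolding \<phi>'_def
    using b1 bij_betw_inv_into_left by fastforce
  have inv2: "\<And>e. e \<in> hE G \<Longrightarrow> \<psi>' (\<psi> e) = e" unfolding \<psi>'_def
    using b2 bij_betw_inv_into_left by fastforce
  have "\<forall>e\<in>hE G'. hlab G (\<psi>' e) = hlab G' e \<and> hinc G (\<psi>' e) = map \<phi>' (hinc G' e)"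
  proof
    fix e assume e: "e \<in> hE G'"
    then obtain d where d: "d \<in> hE G" "e = \<psi> d" using b2 by (auto simp: bij_betw_def)
    have "set (hinc G d) \<subseteq> hV G" using assms(1) d unfolding wf_hg_def by auto
    then show "hlab G (\<psi>' e) = hlab G' e \<and> hinc G (\<psi>' e) = map \<phi>' (hinc G' e)"
      using d l inv2 inv1 by (auto simp: map_idI subset_iff)
  qed
  moreover have "hsrc G = map \<phi>' (hsrc G')" using s inv1 assms(1) unfolding wf_hg_def
    by (auto simp: map_idI subset_iff)
  ultimately show ?thesis unfolding hg_iso_def using b1' b2' by blast
qed

lemma iso_trans: assumes "hg_iso G1 G2" "hg_iso G2 G3" shows "hg_iso G1 G3"
proof -
  from assms(1) obtain \<phi> \<psi> where b1: "bij_betw \<phi> (hV G1) (hV G2)" and b2: "bij_betw \<psi> (hE G1) (hE G2)"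
    and l: "\<forall>e\<in>hE G1. hlab G2 (\<psi> e) = hlab G1 e \<and> hinc G2 (\<psi> e) = map \<phi> (hinc G1 e)"
    and s: "hsrc G2 = map \<phi> (hsrc G1)" unfolding hg_iso_def by blast
  from assms(2) obtain \<phi>2 \<psi>2 where c1: "bij_betw \<phi>2 (hV G2) (hV G3)" and c2: "bij_betw \<psi>2 (hE G2) (hE G3)"
    and l2: "\<forall>e\<in>hE G2. hlab G3 (\<psi>2 e) = hlab G2 e \<and> hinc G3 (\<psi>2 e) = map \<phi>2 (hinc G2 e)"
    and s2: "hsrc G3 = map \<phi>2 (hsrc G2)" unfolding hg_iso_def by blast
  show ?thesis unfolding hg_iso_def
    apply (rule exI[of _ "\<phi>2 \<circ> \<phi>"], rule exI[of _ "\<psi>2 \<circ> \<psi>"])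
    using b1 b2 c1 c2 l l2 s s2 apply (intro conjI bij_betw_trans ballI; simp?)
    by (metis bij_betw_apply map_map)+
qed

lemma wf_iso: assumes "wf_hg C ar G" "hg_iso G G'" shows "wf_hg C ar G'"
proof -
  from assms(2) obtain \<phi> \<psi> where b1: "bij_betw \<phi> (hV G) (hV G')" and b2: "bij_betw \<psi> (hE G) (hE G')"
    and l: "\<forall>e\<in>hE G. hlab G' (\<psi> e) = hlab G e \<and> hinc G' (\<psi> e) = map \<phi> (hinc G e)"
    and s: "hsrc G' = map \<phi> (hsrc G)" unfolding hg_iso_def by blast
  have "finite (hV G')" "finite (hE G')" using assms(1) b1 b2 bij_betw_finite unfolding wf_hg_def by auto
  moreover have "distinct (hsrc G') \<and> set (hsrc G') \<subseteq> hV G'" using s assms(1) b1 unfolding wf_hg_def bij_betw_def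
    by (auto simp: distinct_map inj_on_subset)
  moreover have "\<forall>e\<in>hE G'. hlab G' e \<in> C \<and> distinct (hinc G' e) \<and> set (hinc G' e) \<subseteq> hV G'
                 \<and> length (hinc G' e) = ar (hlab G' e)"
  proof
    fix e assume "e \<in> hE G'"
    then obtain d where d: "d \<in> hE G" "e = \<psi> d" using b2 by (auto simp: bij_betw_def)
    then show "hlab G' e \<in> C \<and> distinct (hinc G' e) \<and> set (hinc G' e) \<subseteq> hV G' \<and> length (hinc G' e) = ar (hlab G' e)"
      using l assms(1) b1 unfolding wf_hg_def bij_betw_def by (fastforce simp: distinct_map inj_on_subset)
  qed
  ultimately show ?thesis unfolding wf_hg_def by blast
qed



lemma wfD: assumes "wf_hg C ar G"
  shows "finite (hV G)" "finite (hE G)" "distinct (hsrc G)" "set (hsrc G) \<subseteq> hV G"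
    "\<And>e. e \<in> hE G \<Longrightarrow> hlab G e \<in> C" "\<And>e. e \<in> hE G \<Longrightarrow> distinct (hinc G e)"
    "\<And>e. e \<in> hE G \<Longrightarrow> set (hinc G e) \<subseteq> hV G" "\<And>e. e \<in> hE G \<Longrightarrow> length (hinc G e) = ar (hlab G e)"
  using assms unfolding wf_hg_def by auto

lemma inj_vL[simp]: "inj_on vL A" by (simp add: inj_on_def)
lemma inj_vR[simp]: "inj_on (vR e) A" by (simp add: inj_on_def)

lemma HH_iff[simp]: "G \<in> HH C ar \<longleftrightarrow> wf_hg C ar G" by (simp add: HH_def)

lemma flatten_simps[simp]:
  "hsrc (flatten G) = map vL (hsrc G)"
  "hE (flatten G) = {prod_encode (e, f) | e f. e \<in> hE G \<and> f \<in> hE (hlab G e)}"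
  "hlab (flatten G) (prod_encode (e, f)) = hlab (hlab G e) f"
  "hinc (flatten G) (prod_encode (e, f)) = map (fl_vmap G e) (hinc (hlab G e) f)"
  "hV (flatten G) = vL ` hV G \<union> {vR e v | e v. e \<in> hE G \<and> v \<in> hV (hlab G e) - set (hsrc (hlab G e))}"
  by (simp_all add: flatten_def)

lemma hg_ar_flatten[simp]: "hg_ar (flatten G) = hg_ar G" by (simp add: hg_ar_def)

lemma fl_vmap_src: "v \<in> set (hsrc (hlab G e)) \<Longrightarrow> fl_vmap G e v = vL (hinc G e ! src_index (hsrc (hlab G e)) v)"
  by (simp add: fl_vmap_def)
lemma fl_vmap_nsrc: "v \<notin> set (hsrc (hlab G e)) \<Longrightarrow> fl_vmap G e v = vR e v"
  by (simp add: fl_vmap_def)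

lemma fl_vmap_in: assumes "wf_hg (HH C ar) hg_ar G" "e \<in> hE G" "v \<in> hV (hlab G e)"
  shows "fl_vmap G e v \<in> hV (flatten G)"
proof (cases "v \<in> set (hsrc (hlab G e))")
  case True
  have w: "wf_hg C ar (hlab G e)" using wfD(5)[OF assms(1,2)] by simp
  have "src_index (hsrc (hlab G e)) v < length (hinc G e)"
    using src_index[OF wfD(3)[OF w] True] wfD(8)[OF assms(1,2)] by (simp add: hg_ar_def)
  then have "hinc G e ! src_index (hsrc (hlab G e)) v \<in> hV G" using wfD(7)[OF assms(1,2)] by auto
  then show ?thesis using True by (simp add: fl_vmap_src)
next
  case False
  then show ?thesis using assms by (auto simp: fl_vmap_nsrc)
qed

lemma fl_vmap_inj: assumes "wf_hg (HH C ar) hg_ar G" "e \<in> hE G"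
  shows "inj_on (fl_vmap G e) (hV (hlab G e))"
proof
  fix v w assume v: "v \<in> hV (hlab G e)" and w: "w \<in> hV (hlab G e)" and eq: "fl_vmap G e v = fl_vmap G e w"
  have wl: "wf_hg C ar (hlab G e)" using wfD(5)[OF assms(1,2)] by simp
  have len: "length (hinc G e) = length (hsrc (hlab G e))" using wfD(8)[OF assms(1,2)] by (simp add: hg_ar_def)
  have d: "distinct (hinc G e)" using wfD(6)[OF assms] .
  show "v = w"
  proof (cases "v \<in> set (hsrc (hlab G e))"; cases "w \<in> set (hsrc (hlab G e))")
    assume a: "v \<in> set (hsrc (hlab G e))" "w \<in> set (hsrc (hlab G e))"
    then have "hinc G e ! src_index (hsrc (hlab G e)) v = hinc G e ! src_index (hsrc (hlab G e)) w"
      using eq by (simp add: fl_vmap_src)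
    moreover have "src_index (hsrc (hlab G e)) v < length (hinc G e)" "src_index (hsrc (hlab G e)) w < length (hinc G e)"
      using src_index[OF wfD(3)[OF wl] a(1)] src_index[OF wfD(3)[OF wl] a(2)] len by auto
    ultimately have "src_index (hsrc (hlab G e)) v = src_index (hsrc (hlab G e)) w"
      using nth_eq_iff_index_eq[OF d] by blast
    then show ?thesis using src_index[OF wfD(3)[OF wl] a(1)] src_index[OF wfD(3)[OF wl] a(2)] by metis
  next
    assume a: "v \<in> set (hsrc (hlab G e))" "w \<notin> set (hsrc (hlab G e))"
    then show ?thesis using eq fl_vmap_src[OF a(1)] fl_vmap_nsrc[OF a(2)] by simp
  next
    assume a: "v \<notin> set (hsrc (hlab G e))" "w \<in> set (hsrc (hlab G e))"
    then show ?thesis using eq fl_vmap_src[OF a(2)] fl_vmap_nsrc[OF a(1)] by simp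
  next
    assume a: "v \<notin> set (hsrc (hlab G e))" "w \<notin> set (hsrc (hlab G e))"
    then show ?thesis using eq fl_vmap_nsrc[OF a(2)] fl_vmap_nsrc[OF a(1)] by simp
  qed
qed

lemma wf_flatten: assumes "wf_hg (HH C ar) hg_ar G" shows "wf_hg C ar (flatten G)"
proof -
  have f1: "finite (hV (flatten G))"
  proof -
    have "{vR e v | e v. e \<in> hE G \<and> v \<in> hV (hlab G e) - set (hsrc (hlab G e))}
       \<subseteq> (\<Union>e\<in>hE G. vR e ` hV (hlab G e))" by auto
    moreover have "finite (\<Union>e\<in>hE G. vR e ` hV (hlab G e))"
      using wfD(2,5)[OF assms] wfD(1)[of C ar] by simp
    ultimately show ?thesis using wfD(1)[OF assms] by (auto intro: finite_subset)
  qed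
  have f2: "finite (hE (flatten G))"
  proof -
    have "hE (flatten G) \<subseteq> (\<Union>e\<in>hE G. (\<lambda>f. prod_encode (e, f)) ` hE (hlab G e))" by auto
    moreover have "finite (\<Union>e\<in>hE G. (\<lambda>f. prod_encode (e, f)) ` hE (hlab G e))"
      using wfD(2,5)[OF assms] wfD(2)[of C ar] by simp
    ultimately show ?thesis by (auto intro: finite_subset)
  qed
  have ed: "\<forall>x\<in>hE (flatten G). hlab (flatten G) x \<in> C \<and> distinct (hinc (flatten G) x) \<and>
      set (hinc (flatten G) x) \<subseteq> hV (flatten G) \<and> length (hinc (flatten G) x) = ar (hlab (flatten G) x)"
  proof
    fix x assume "x \<in> hE (flatten G)"
    then obtain e f where x: "x = prod_encode (e, f)" "e \<in> hE G" "f \<in> hE (hlab G e)" by auto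
    have wl: "wf_hg C ar (hlab G e)" using wfD(5)[OF assms x(2)] by simp
    show "hlab (flatten G) x \<in> C \<and> distinct (hinc (flatten G) x) \<and>
      set (hinc (flatten G) x) \<subseteq> hV (flatten G) \<and> length (hinc (flatten G) x) = ar (hlab (flatten G) x)"
      using x wfD(5,6,7,8)[OF wl x(3)] fl_vmap_in[OF assms x(2)] fl_vmap_inj[OF assms x(2)]
    proof (intro conjI)
      show "hlab (flatten G) x \<in> C" using x wfD(5)[OF wl x(3)] by simp
      show "distinct (hinc (flatten G) x)" using x wfD(6,7)[OF wl x(3)] fl_vmap_inj[OF assms x(2)]
        by (simp add: distinct_map inj_on_subset)
      show "set (hinc (flatten G) x) \<subseteq> hV (flatten G)" using x wfD(7)[OF wl x(3)] fl_vmap_in[OF assms x(2)]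
        by (simp only: flatten_simps set_map) blast
      show "length (hinc (flatten G) x) = ar (hlab (flatten G) x)" using x wfD(8)[OF wl x(3)] by simp
    qed
  qed
  show ?thesis unfolding wf_hg_def using f1 f2 ed wfD(3,4)[OF assms] by (auto simp: distinct_map)
qed



lemma sumenc_inj[simp]: "sum_encode (Inr a) = sum_encode (Inr b) \<longleftrightarrow> a = b"
  by (simp add: sum_encode_eq)

lemma par_simps[simp]:
  "hV (hg_par G H) = vL ` hV G \<union> (\<lambda>v. sum_encode (Inr v)) ` (hV H - set (hsrc H))"
  "hE (hg_par G H) = vL ` hE G \<union> (\<lambda>e. sum_encode (Inr e)) ` hE H"
  "hlab (hg_par G H) (vL e) = hlab G e"
  "hlab (hg_par G H) (sum_encode (Inr e)) = hlab H e"
  "hinc (hg_par G H) (vL e) = map vL (hinc G e)"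
  "hinc (hg_par G H) (sum_encode (Inr e)) = map (par_vmap G H) (hinc H e)"
  "hsrc (hg_par G H) = map vL (hsrc G)"
  by (simp_all add: hg_par_def vL_def)

definition fb :: "'l shg \<Rightarrow> nat" where "fb G = Suc (Max (insert 0 (hV G)))"

lemma fb_less: "finite (hV G) \<Longrightarrow> v \<in> hV G \<Longrightarrow> v < fb G"
  unfolding fb_def by (simp add: le_imp_less_Suc)

definition hg_fresh :: "'l shg \<Rightarrow> nat \<Rightarrow> 'l shg" where
  "hg_fresh G m = G\<lparr>hV := hV G \<union> {fb G..<fb G + m}, hsrc := hsrc G @ [fb G..<fb G + m]\<rparr>"

lemma fresh_simps[simp]:
  "hV (hg_fresh G m) = hV G \<union> {fb G..<fb G + m}"
  "hsrc (hg_fresh G m) = hsrc G @ [fb G..<fb G + m]"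
  "hE (hg_fresh G m) = hE G" "hlab (hg_fresh G m) = hlab G" "hinc (hg_fresh G m) = hinc G"
  "hg_ar (hg_fresh G m) = hg_ar G + m"
  by (simp_all add: hg_fresh_def hg_ar_def)

definition del_edge :: "'l shg \<Rightarrow> nat \<Rightarrow> 'l shg" where
  "del_edge K e = K\<lparr>hE := hE K - {e}\<rparr>"

lemma del_edge_simps[simp]: "hV (del_edge K e) = hV K" "hE (del_edge K e) = hE K - {e}"
  "hlab (del_edge K e) = hlab K" "hinc (del_edge K e) = hinc K" "hsrc (del_edge K e) = hsrc K"
  by (simp_all add: del_edge_def)

lemma fl_vmap_cong: "hlab K' = hlab K \<Longrightarrow> hinc K' = hinc K \<Longrightarrow> fl_vmap K' = fl_vmap K"
  by (simp add: fl_vmap_def fun_eq_iff)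

lemma flatten_split:
  assumes wf: "wf_hg (HH C ar) hg_ar K" and e: "e \<in> hE K" and s: "hsrc K = hinc K e @ rest"
  shows "hg_iso (hg_par (flatten (del_edge K e)) (hg_fresh (hlab K e) (length rest))) (flatten K)"
proof -
  define Lab where "Lab = hlab K e"
  define P where "P = flatten (del_edge K e)"
  define m where "m = length rest"
  define Y where "Y = hg_fresh Lab m"
  define N where "N = fb Lab"
  have wl: "wf_hg C ar Lab" using wfD(5)[OF wf e] by (simp add: Lab_def)
  have lenk: "length (hinc K e) = length (hsrc Lab)" using wfD(8)[OF wf e] by (simp add: Lab_def hg_ar_def)
  have Nl: "\<And>v. v \<in> hV Lab \<Longrightarrow> v < N" using fb_less[OF wfD(1)[OF wl]] by (simp add: N_def)
  have nsY: "hV Y - set (hsrc Y) = hV Lab - set (hsrc Lab)" using Nl by (auto simp: Y_def N_def) (meson leD)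
  have flP: "fl_vmap (del_edge K e) = fl_vmap K" by (rule fl_vmap_cong) simp_all
  have hVP: "hV P = vL ` hV K \<union> {vR e' v | e' v. e' \<in> hE K - {e} \<and> v \<in> hV (hlab K e') - set (hsrc (hlab K e'))}"
    by (simp add: P_def)
  have hEP: "hE P = {prod_encode (e', f) | e' f. e' \<in> hE K - {e} \<and> f \<in> hE (hlab K e')}"
    by (simp add: P_def)
  define \<phi> :: "nat \<Rightarrow> nat" where "\<phi> y = (case sum_decode y of Inl a \<Rightarrow> a | Inr w \<Rightarrow> vR e w)" for y
  define \<iota> :: "nat \<Rightarrow> nat" where "\<iota> x = (case sum_decode x of Inl v \<Rightarrow> vL x
       | Inr p \<Rightarrow> (case prod_decode p of (e', w) \<Rightarrow> if e' = e then sum_encode (Inr w) else vL x))" for x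
  define \<psi> :: "nat \<Rightarrow> nat" where "\<psi> y = (case sum_decode y of Inl x \<Rightarrow> x | Inr f \<Rightarrow> prod_encode (e, f))" for y
  define \<kappa> :: "nat \<Rightarrow> nat" where "\<kappa> x = (case prod_decode x of (e', f) \<Rightarrow>
       if e' = e then sum_encode (Inr f) else vL x)" for x
  have \<phi>L[simp]: "\<phi> (vL a) = a" "\<phi> (sum_encode (Inr w)) = vR e w" for a w by (simp_all add: \<phi>_def)
  have \<psi>L[simp]: "\<psi> (vL a) = a" "\<psi> (sum_encode (Inr w)) = prod_encode (e, w)" for a w by (simp_all add: \<psi>_def)
  have \<iota>L[simp]: "\<iota> (vL v) = vL (vL v)" "\<iota> (vR e' w) = (if e' = e then sum_encode (Inr w) else vL (vR e' w))" for v e' w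
    by (simp_all add: \<iota>_def)
  have \<kappa>L[simp]: "\<kappa> (prod_encode (e', f)) = (if e' = e then sum_encode (Inr f) else vL (prod_encode (e', f)))" for e' f
    by (simp add: \<kappa>_def)
  have b1: "bij_betw \<phi> (hV (hg_par P Y)) (hV (flatten K))"
  proof (rule bij_betw_byWitness[where f' = \<iota>])
    show "\<forall>a\<in>hV (hg_par P Y). \<iota> (\<phi> a) = a" using nsY by (auto simp: hVP)
    show "\<forall>a\<in>hV (flatten K). \<phi> (\<iota> a) = a" by auto
    show "\<phi> ` hV (hg_par P Y) \<subseteq> hV (flatten K)" using nsY e by (auto simp: hVP Lab_def)
    show "\<iota> ` hV (flatten K) \<subseteq> hV (hg_par P Y)" using nsY by (auto simp: hVP Lab_def)
  qed
  have b2: "bij_betw \<psi> (hE (hg_par P Y)) (hE (flatten K))"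
  proof (rule bij_betw_byWitness[where f' = \<kappa>])
    show "\<forall>a\<in>hE (hg_par P Y). \<kappa> (\<psi> a) = a" by (auto simp: hEP)
    show "\<forall>a\<in>hE (flatten K). \<psi> (\<kappa> a) = a" by auto
    show "\<psi> ` hE (hg_par P Y) \<subseteq> hE (flatten K)" using e by (auto simp: hEP Y_def Lab_def)
    show "\<kappa> ` hE (flatten K) \<subseteq> hE (hg_par P Y)" by (auto simp: hEP Y_def Lab_def)
  qed
  have inc: "\<forall>y\<in>hE (hg_par P Y). hlab (flatten K) (\<psi> y) = hlab (hg_par P Y) y \<and>
       hinc (flatten K) (\<psi> y) = map \<phi> (hinc (hg_par P Y) y)"
  proof
    fix y assume "y \<in> hE (hg_par P Y)"
    then consider (a) x where "y = vL x" "x \<in> hE P" | (b) f where "y = sum_encode (Inr f)" "f \<in> hE Lab"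
      by (auto simp: Y_def)
    then show "hlab (flatten K) (\<psi> y) = hlab (hg_par P Y) y \<and> hinc (flatten K) (\<psi> y) = map \<phi> (hinc (hg_par P Y) y)"
    proof cases
      case a
      then obtain e' f where "x = prod_encode (e', f)" by (auto simp: hEP)
      then show ?thesis using a by (simp add: P_def flP)
    next
      case b
      have "fl_vmap K e v = \<phi> (par_vmap P Y v)" if v: "v \<in> hV Lab" for v
      proof (cases "v \<in> set (hsrc Lab)")
        case True
        have j: "src_index (hsrc Lab) v < length (hsrc Lab)" using src_index[OF wfD(3)[OF wl] True] by simp
        have dY: "distinct (hsrc Y)" using wfD(3)[OF wl] Nl wfD(4)[OF wl] by (auto simp: Y_def N_def) (meson leD subsetD)
        have "src_index (hsrc Y) v = src_index (hsrc Lab) v"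
          using src_index_app[of "hsrc Lab" _ v] dY True by (simp add: Y_def)
        moreover have "hsrc P ! src_index (hsrc Lab) v = vL (hinc K e ! src_index (hsrc Lab) v)"
          using j lenk s by (simp add: P_def nth_append)
        ultimately show ?thesis using True
          by (simp add: par_vmap_def fl_vmap_src Y_def Lab_def[symmetric])
      next
        case False
        have "v \<notin> set (hsrc Y)" using False Nl[OF v] by (auto simp: Y_def N_def)
        then show ?thesis using False by (simp add: par_vmap_def fl_vmap_nsrc Lab_def[symmetric])
      qed
      then show ?thesis using b wfD(7)[OF wl b(2)]
        by (auto simp: Y_def Lab_def[symmetric] subset_iff)
    qed
  qed
  have src: "hsrc (flatten K) = map \<phi> (hsrc (hg_par P Y))" by (simp add: P_def)
  show ?thesis unfolding hg_iso_def Y_def[symmetric] P_def[symmetric] m_def[symmetric] Lab_def[symmetric]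
    using b1 b2 inc src by blast
qed



lemma iso_elim:
  assumes "hg_iso G G'"
  obtains \<phi> \<psi> \<phi>' \<psi>' where "bij_betw \<phi> (hV G) (hV G')" "bij_betw \<psi> (hE G) (hE G')"
    "\<forall>e\<in>hE G. hlab G' (\<psi> e) = hlab G e \<and> hinc G' (\<psi> e) = map \<phi> (hinc G e)"
    "hsrc G' = map \<phi> (hsrc G)"
    "\<forall>v\<in>hV G. \<phi> v \<in> hV G' \<and> \<phi>' (\<phi> v) = v" "\<forall>v\<in>hV G'. \<phi>' v \<in> hV G \<and> \<phi> (\<phi>' v) = v"
    "\<forall>e\<in>hE G. \<psi> e \<in> hE G' \<and> \<psi>' (\<psi> e) = e" "\<forall>e\<in>hE G'. \<psi>' e \<in> hE G \<and> \<psi> (\<psi>' e) = e"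
proof -
  from assms obtain \<phi> \<psi> where b1: "bij_betw \<phi> (hV G) (hV G')" and b2: "bij_betw \<psi> (hE G) (hE G')"
    and l: "\<forall>e\<in>hE G. hlab G' (\<psi> e) = hlab G e \<and> hinc G' (\<psi> e) = map \<phi> (hinc G e)"
    and s: "hsrc G' = map \<phi> (hsrc G)" unfolding hg_iso_def by blast
  show ?thesis
    apply (rule that[OF b1 b2 l s, of "inv_into (hV G) \<phi>" "inv_into (hE G) \<psi>"])
    using b1 b2 by (auto simp: bij_betw_def inv_into_into f_inv_into_f)
qed

lemma par_D:
  assumes wX: "wf_hg C ar X" and dE: "hE D = {}" and dV: "set (hsrc D) = hV D" and dd: "distinct (hsrc D)"
    and len: "length (hsrc D) = length (hsrc X)"
  shows "hg_iso X (hg_par D X)"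
proof -
  define \<iota> :: "nat \<Rightarrow> nat" where "\<iota> y = (case sum_decode y of Inl a \<Rightarrow> hsrc X ! src_index (hsrc D) a | Inr v \<Rightarrow> v)" for y
  define \<kappa> :: "nat \<Rightarrow> nat" where "\<kappa> y = (case sum_decode y of Inl a \<Rightarrow> 0 | Inr v \<Rightarrow> v)" for y
  have dX: "distinct (hsrc X)" using wfD(3)[OF wX] .
  have pv: "par_vmap D X v = (if v \<in> set (hsrc X) then vL (hsrc D ! src_index (hsrc X) v) else sum_encode (Inr v))" for v
    by (simp add: par_vmap_def)
  have b1: "bij_betw (par_vmap D X) (hV X) (hV (hg_par D X))"
  proof (rule bij_betw_byWitness[where f' = \<iota>])
    show "\<forall>a\<in>hV X. \<iota> (par_vmap D X a) = a"
    proof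
      fix a assume "a \<in> hV X"
      show "\<iota> (par_vmap D X a) = a"
      proof (cases "a \<in> set (hsrc X)")
        case True
        have j: "src_index (hsrc X) a < length (hsrc X)" "hsrc X ! src_index (hsrc X) a = a"
          using src_index[OF dX True] by auto
        then show ?thesis using True len dd by (simp add: pv \<iota>_def src_index_nth)
      qed (simp add: pv \<iota>_def)
    qed
    show "\<forall>a\<in>hV (hg_par D X). par_vmap D X (\<iota> a) = a"
    proof
      fix y assume "y \<in> hV (hg_par D X)"
      then consider (a) a where "y = vL a" "a \<in> set (hsrc D)" | (b) v where "y = sum_encode (Inr v)" "v \<in> hV X - set (hsrc X)"
        using dV by auto
      then show "par_vmap D X (\<iota> y) = y"
      proof cases
        case a
        have j: "src_index (hsrc D) a < length (hsrc D)" "hsrc D ! src_index (hsrc D) a = a"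
          using src_index[OF dd a(2)] by auto
        then show ?thesis using a len dX by (simp add: pv \<iota>_def src_index_nth)
      qed (simp add: pv \<iota>_def)
    qed
    show "par_vmap D X ` hV X \<subseteq> hV (hg_par D X)"
    proof
      fix y assume "y \<in> par_vmap D X ` hV X"
      then obtain a where a: "a \<in> hV X" "y = par_vmap D X a" by auto
      show "y \<in> hV (hg_par D X)"
      proof (cases "a \<in> set (hsrc X)")
        case True
        then have "src_index (hsrc X) a < length (hsrc D)" using src_index[OF dX True] len by auto
        then have "hsrc D ! src_index (hsrc X) a \<in> hV D" using dV nth_mem by blast
        then show ?thesis using a True by (simp add: pv)
      qed (use a in \<open>simp add: pv\<close>)
    qed
    show "\<iota> ` hV (hg_par D X) \<subseteq> hV X"
    proof
      fix x assume "x \<in> \<iota> ` hV (hg_par D X)"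
      then obtain y where y: "y \<in> hV (hg_par D X)" "x = \<iota> y" by auto
      then consider (a) a where "y = vL a" "a \<in> set (hsrc D)" | (b) v where "y = sum_encode (Inr v)" "v \<in> hV X - set (hsrc X)"
        using dV by auto
      then show "x \<in> hV X"
      proof cases
        case a
        have j: "src_index (hsrc D) a < length (hsrc D)"
          using src_index[OF dd a(2)] by auto
        then show ?thesis using a y len wfD(4)[OF wX] by (auto simp: \<iota>_def)
      qed (use y in \<open>simp add: \<iota>_def\<close>)
    qed
  qed
  have b2: "bij_betw (\<lambda>e. sum_encode (Inr e)) (hE X) (hE (hg_par D X))"
    by (rule bij_betw_byWitness[where f' = \<kappa>]) (auto simp: \<kappa>_def dE)
  have src: "hsrc (hg_par D X) = map (par_vmap D X) (hsrc X)"
  proof (rule nth_equalityI)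
    show "length (hsrc (hg_par D X)) = length (map (par_vmap D X) (hsrc X))" using len by simp
    fix i assume "i < length (hsrc (hg_par D X))"
    then have i: "i < length (hsrc X)" using len by simp
    then show "hsrc (hg_par D X) ! i = map (par_vmap D X) (hsrc X) ! i"
      using len dX by (simp add: pv src_index_nth)
  qed
  show ?thesis unfolding hg_iso_def
    apply (rule exI[of _ "par_vmap D X"], rule exI[of _ "\<lambda>e. sum_encode (Inr e)"])
    using b1 b2 src by simp
qed

lemma par_iso1:
  assumes iso: "hg_iso G G'" and wH: "wf_hg C ar H" and len: "length (hsrc G) = length (hsrc H)"
  shows "hg_iso (hg_par G H) (hg_par G' H)"
proof -
  obtain \<phi> \<psi> \<phi>' \<psi>' where b1: "bij_betw \<phi> (hV G) (hV G')" and b2: "bij_betw \<psi> (hE G) (hE G')"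
    and l: "\<forall>e\<in>hE G. hlab G' (\<psi> e) = hlab G e \<and> hinc G' (\<psi> e) = map \<phi> (hinc G e)"
    and s: "hsrc G' = map \<phi> (hsrc G)"
    and i1: "\<forall>v\<in>hV G. \<phi> v \<in> hV G' \<and> \<phi>' (\<phi> v) = v" and i2: "\<forall>v\<in>hV G'. \<phi>' v \<in> hV G \<and> \<phi> (\<phi>' v) = v"
    and i3: "\<forall>e\<in>hE G. \<psi> e \<in> hE G' \<and> \<psi>' (\<psi> e) = e" and i4: "\<forall>e\<in>hE G'. \<psi>' e \<in> hE G \<and> \<psi> (\<psi>' e) = e"
    using iso_elim[OF iso] by blast
  define F :: "(nat \<Rightarrow> nat) \<Rightarrow> nat \<Rightarrow> nat" where "F f y = (case sum_decode y of Inl a \<Rightarrow> vL (f a) | Inr v \<Rightarrow> sum_encode (Inr v))" for f y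
  have F[simp]: "F f (vL a) = vL (f a)" "F f (sum_encode (Inr v)) = sum_encode (Inr v)" for f a v by (simp_all add: F_def)
  have bb1: "bij_betw (F \<phi>) (hV (hg_par G H)) (hV (hg_par G' H))"
    apply (rule bij_betw_byWitness[where f' = "F \<phi>'"])
    using i1 i2 by auto
  have bb2: "bij_betw (F \<psi>) (hE (hg_par G H)) (hE (hg_par G' H))"
    apply (rule bij_betw_byWitness[where f' = "F \<psi>'"])
    using i3 i4 by auto
  have pv: "par_vmap G' H v = F \<phi> (par_vmap G H v)" if "v \<in> hV H" for v
  proof (cases "v \<in> set (hsrc H)")
    case True
    have "src_index (hsrc H) v < length (hsrc G)" using src_index[OF wfD(3)[OF wH] True] len by simp
    then show ?thesis using True s by (simp add: par_vmap_def)
  qed (simp add: par_vmap_def)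
  have inc: "\<forall>y\<in>hE (hg_par G H). hlab (hg_par G' H) (F \<psi> y) = hlab (hg_par G H) y \<and>
      hinc (hg_par G' H) (F \<psi> y) = map (F \<phi>) (hinc (hg_par G H) y)"
  proof
    fix y assume "y \<in> hE (hg_par G H)"
    then consider (a) e where "y = vL e" "e \<in> hE G" | (b) e where "y = sum_encode (Inr e)" "e \<in> hE H" by auto
    then show "hlab (hg_par G' H) (F \<psi> y) = hlab (hg_par G H) y \<and>
      hinc (hg_par G' H) (F \<psi> y) = map (F \<phi>) (hinc (hg_par G H) y)"
    proof cases
      case a then show ?thesis using l by simp
    next
      case b then show ?thesis using pv wfD(7)[OF wH b(2)] by auto
    qed
  qed
  show ?thesis unfolding hg_iso_def
    apply (rule exI[of _ "F \<phi>"], rule exI[of _ "F \<psi>"])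
    using bb1 bb2 inc s by simp
qed

lemma addv_iso:
  assumes w: "w \<notin> hV H"
  shows "hg_iso (hg_addv H) (H\<lparr>hV := hV H \<union> {w}, hsrc := hsrc H @ [w]\<rparr>)"
proof -
  define \<phi> :: "nat \<Rightarrow> nat" where "\<phi> y = (case sum_decode y of Inl v \<Rightarrow> v | Inr _ \<Rightarrow> w)" for y
  define \<iota> :: "nat \<Rightarrow> nat" where "\<iota> v = (if v = w then sum_encode (Inr 0) else vL v)" for v
  have b1: "bij_betw \<phi> (hV (hg_addv H)) (hV H \<union> {w})"
    apply (rule bij_betw_byWitness[where f' = \<iota>])
    using w by (auto simp: hg_addv_def \<phi>_def \<iota>_def)
  show ?thesis unfolding hg_iso_def
    apply (rule exI[of _ \<phi>], rule exI[of _ id])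
    using b1 by (simp add: hg_addv_def \<phi>_def comp_def)
qed

lemma fresh_Suc: "hg_fresh G (Suc m) = (hg_fresh G m)\<lparr>hV := hV (hg_fresh G m) \<union> {fb G + m}, hsrc := hsrc (hg_fresh G m) @ [fb G + m]\<rparr>"
  by (simp add: hg_fresh_def atLeastLessThanSuc)

lemma fresh_0[simp]: "hg_fresh G 0 = G" by (simp add: hg_fresh_def)

lemma wf_fresh: "wf_hg C ar G \<Longrightarrow> wf_hg C ar (hg_fresh G m)"
  unfolding wf_hg_def using fb_less[of G] by (auto simp: hg_fresh_def) (meson leD subsetD)+

lemma restrict_iso:
  assumes iso: "hg_iso G G'" and fs: "set fs \<subseteq> {..<length (hsrc G)}"
  shows "hg_iso (hg_restrict fs G) (hg_restrict fs G')"
proof -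
  from iso obtain \<phi> \<psi> where b1: "bij_betw \<phi> (hV G) (hV G')" and b2: "bij_betw \<psi> (hE G) (hE G')"
    and l: "\<forall>e\<in>hE G. hlab G' (\<psi> e) = hlab G e \<and> hinc G' (\<psi> e) = map \<phi> (hinc G e)"
    and s: "hsrc G' = map \<phi> (hsrc G)" unfolding hg_iso_def by blast
  have "map (\<lambda>i. hsrc G' ! i) fs = map \<phi> (map (\<lambda>i. hsrc G ! i) fs)" using s fs by (auto simp: subset_iff)
  then show ?thesis unfolding hg_iso_def hg_restrict_def using b1 b2 l by auto
qed



lemma relabel_simps[simp]: "hV (relabel f G) = hV G" "hE (relabel f G) = hE G"
  "hlab (relabel f G) e = f (hlab G e)" "hinc (relabel f G) = hinc G" "hsrc (relabel f G) = hsrc G"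
  by (simp_all add: relabel_def)

lemma flatten_iso:
  assumes wf: "wf_hg (HH C ar) hg_ar G" and iso: "hg_iso G G'"
  shows "hg_iso (flatten G) (flatten G')"
proof -
  obtain \<phi> \<psi> \<phi>' \<psi>' where b1: "bij_betw \<phi> (hV G) (hV G')" and b2: "bij_betw \<psi> (hE G) (hE G')"
    and l: "\<forall>e\<in>hE G. hlab G' (\<psi> e) = hlab G e \<and> hinc G' (\<psi> e) = map \<phi> (hinc G e)"
    and s: "hsrc G' = map \<phi> (hsrc G)"
    and i1: "\<forall>v\<in>hV G. \<phi> v \<in> hV G' \<and> \<phi>' (\<phi> v) = v" and i2: "\<forall>v\<in>hV G'. \<phi>' v \<in> hV G \<and> \<phi> (\<phi>' v) = v"
    and i3: "\<forall>e\<in>hE G. \<psi> e \<in> hE G' \<and> \<psi>' (\<psi> e) = e" and i4: "\<forall>e\<in>hE G'. \<psi>' e \<in> hE G \<and> \<psi> (\<psi>' e) = e"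
    using iso_elim[OF iso] by blast
  define F :: "(nat \<Rightarrow> nat) \<Rightarrow> (nat \<Rightarrow> nat) \<Rightarrow> nat \<Rightarrow> nat" where
    "F f g y = (case sum_decode y of Inl v \<Rightarrow> vL (f v) | Inr p \<Rightarrow> (case prod_decode p of (e, w) \<Rightarrow> vR (g e) w))" for f g y
  define E :: "(nat \<Rightarrow> nat) \<Rightarrow> nat \<Rightarrow> nat" where
    "E g x = (case prod_decode x of (e, f) \<Rightarrow> prod_encode (g e, f))" for g x
  have F[simp]: "F f g (vL v) = vL (f v)" "F f g (vR e w) = vR (g e) w" for f g v e w by (simp_all add: F_def)
  have E[simp]: "E g (prod_encode (e, f)) = prod_encode (g e, f)" for g e f by (simp add: E_def)
  have lab: "\<And>e. e \<in> hE G \<Longrightarrow> hlab G' (\<psi> e) = hlab G e" using l by blast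
  have lab': "\<And>e. e \<in> hE G' \<Longrightarrow> hlab G (\<psi>' e) = hlab G' e" using lab i4 by metis
  have bb1: "bij_betw (F \<phi> \<psi>) (hV (flatten G)) (hV (flatten G'))"
  proof (rule bij_betw_byWitness[where f' = "F \<phi>' \<psi>'"])
    show "\<forall>a\<in>hV (flatten G). F \<phi>' \<psi>' (F \<phi> \<psi> a) = a" using i1 i3 by auto
    show "\<forall>a\<in>hV (flatten G'). F \<phi> \<psi> (F \<phi>' \<psi>' a) = a" using i2 i4 by auto
    show "F \<phi> \<psi> ` hV (flatten G) \<subseteq> hV (flatten G')" using i1 i3 lab by fastforce
    show "F \<phi>' \<psi>' ` hV (flatten G') \<subseteq> hV (flatten G)" using i2 i4 lab' by fastforce
  qed
  have bb2: "bij_betw (E \<psi>) (hE (flatten G)) (hE (flatten G'))"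
  proof (rule bij_betw_byWitness[where f' = "E \<psi>'"])
    show "\<forall>a\<in>hE (flatten G). E \<psi>' (E \<psi> a) = a" using i3 by auto
    show "\<forall>a\<in>hE (flatten G'). E \<psi> (E \<psi>' a) = a" using i4 by auto
    show "E \<psi> ` hE (flatten G) \<subseteq> hE (flatten G')" using i3 lab by fastforce
    show "E \<psi>' ` hE (flatten G') \<subseteq> hE (flatten G)" using i4 lab' by fastforce
  qed
  have fv: "fl_vmap G' (\<psi> e) v = F \<phi> \<psi> (fl_vmap G e v)" if e: "e \<in> hE G" and v: "v \<in> hV (hlab G e)" for e v
  proof (cases "v \<in> set (hsrc (hlab G e))")
    case True
    have wl: "wf_hg C ar (hlab G e)" using wfD(5)[OF wf e] by simp
    have "src_index (hsrc (hlab G e)) v < length (hinc G e)"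
      using src_index[OF wfD(3)[OF wl] True] wfD(8)[OF wf e] by (simp add: hg_ar_def)
    then show ?thesis using True l e by (simp add: fl_vmap_src)
  next
    case False
    then show ?thesis using l e by (simp add: fl_vmap_nsrc)
  qed
  have inc: "\<forall>x\<in>hE (flatten G). hlab (flatten G') (E \<psi> x) = hlab (flatten G) x \<and>
      hinc (flatten G') (E \<psi> x) = map (F \<phi> \<psi>) (hinc (flatten G) x)"
  proof
    fix x assume "x \<in> hE (flatten G)"
    then obtain e f where x: "x = prod_encode (e, f)" "e \<in> hE G" "f \<in> hE (hlab G e)" by auto
    have wl: "wf_hg C ar (hlab G e)" using wfD(5)[OF wf x(2)] by simp
    show "hlab (flatten G') (E \<psi> x) = hlab (flatten G) x \<and>
      hinc (flatten G') (E \<psi> x) = map (F \<phi> \<psi>) (hinc (flatten G) x)"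
      using x lab[OF x(2)] fv[OF x(2)] wfD(7)[OF wl x(3)] by (auto simp: subset_iff)
  qed
  show ?thesis unfolding hg_iso_def
    apply (rule exI[of _ "F \<phi> \<psi>"], rule exI[of _ "E \<psi>"])
    using bb1 bb2 inc s by simp
qed



lemma flatten_assoc:
  assumes wf: "wf_hg (HH (HH C ar) hg_ar) hg_ar K"
  shows "hg_iso (flatten (flatten K)) (flatten (relabel flatten K))"
proof -
  define K' where "K' = relabel flatten K"
  define \<Phi> :: "nat \<Rightarrow> nat" where "\<Phi> y = (case sum_decode y of
      Inl a \<Rightarrow> (case sum_decode a of Inl v \<Rightarrow> vL v | Inr p \<Rightarrow> (case prod_decode p of (e, w) \<Rightarrow> vR e (vL w)))
    | Inr p \<Rightarrow> (case prod_decode p of (x, u) \<Rightarrow> (case prod_decode x of (e, f) \<Rightarrow> vR e (vR f u))))" for y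
  define \<Phi>' :: "nat \<Rightarrow> nat" where "\<Phi>' y = (case sum_decode y of
      Inl v \<Rightarrow> vL (vL v)
    | Inr p \<Rightarrow> (case prod_decode p of (e, x) \<Rightarrow> (case sum_decode x of Inl w \<Rightarrow> vL (vR e w)
        | Inr q \<Rightarrow> (case prod_decode q of (f, u) \<Rightarrow> vR (prod_encode (e, f)) u))))" for y
  define \<Psi> :: "nat \<Rightarrow> nat" where "\<Psi> x = (case prod_decode x of (y, g) \<Rightarrow>
      (case prod_decode y of (e, f) \<Rightarrow> prod_encode (e, prod_encode (f, g))))" for x
  define \<Psi>' :: "nat \<Rightarrow> nat" where "\<Psi>' x = (case prod_decode x of (e, y) \<Rightarrow>
      (case prod_decode y of (f, g) \<Rightarrow> prod_encode (prod_encode (e, f), g)))" for x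
  have \<Phi>[simp]: "\<Phi> (vL (vL v)) = vL v" "\<Phi> (vL (vR e w)) = vR e (vL w)" "\<Phi> (vR (prod_encode (e, f)) u) = vR e (vR f u)"
    for v e w f u by (simp_all add: \<Phi>_def)
  have \<Phi>'[simp]: "\<Phi>' (vL v) = vL (vL v)" "\<Phi>' (vR e (vL w)) = vL (vR e w)" "\<Phi>' (vR e (vR f u)) = vR (prod_encode (e, f)) u"
    for v e w f u by (simp_all add: \<Phi>'_def)
  have \<Psi>[simp]: "\<Psi> (prod_encode (prod_encode (e, f), g)) = prod_encode (e, prod_encode (f, g))" for e f g
    by (simp add: \<Psi>_def)
  have \<Psi>'[simp]: "\<Psi>' (prod_encode (e, prod_encode (f, g))) = prod_encode (prod_encode (e, f), g)" for e f g
    by (simp add: \<Psi>'_def)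
  have K'[simp]: "hlab K' e = flatten (hlab K e)" "hV K' = hV K" "hE K' = hE K" "hinc K' = hinc K" "hsrc K' = hsrc K" for e
    by (simp_all add: K'_def)
  have nvL: "vL w \<notin> set (map vL s) \<longleftrightarrow> w \<notin> set s" for w s by auto
  have V1: "hV (flatten (flatten K)) = vL ` vL ` hV K
      \<union> {vL (vR e w) | e w. e \<in> hE K \<and> w \<in> hV (hlab K e) - set (hsrc (hlab K e))}
      \<union> {vR (prod_encode (e, f)) u | e f u. e \<in> hE K \<and> f \<in> hE (hlab K e) \<and>
           u \<in> hV (hlab (hlab K e) f) - set (hsrc (hlab (hlab K e) f))}"
    by (auto simp: image_Un; blast)
  have V2: "hV (flatten K') = vL ` hV K
      \<union> {vR e (vL w) | e w. e \<in> hE K \<and> w \<in> hV (hlab K e) - set (hsrc (hlab K e))}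
      \<union> {vR e (vR f u) | e f u. e \<in> hE K \<and> f \<in> hE (hlab K e) \<and>
           u \<in> hV (hlab (hlab K e) f) - set (hsrc (hlab (hlab K e) f))}"
    by (auto simp: nvL; blast)
  have E1: "hE (flatten (flatten K)) = {prod_encode (prod_encode (e, f), g) | e f g. e \<in> hE K \<and> f \<in> hE (hlab K e) \<and>
           g \<in> hE (hlab (hlab K e) f)}"
    by (auto; blast)
  have E2: "hE (flatten K') = {prod_encode (e, prod_encode (f, g)) | e f g. e \<in> hE K \<and> f \<in> hE (hlab K e) \<and>
           g \<in> hE (hlab (hlab K e) f)}"
    by (auto; blast)
  have c1: "P a" if "a \<in> hV (flatten (flatten K))" "\<And>v. v \<in> hV K \<Longrightarrow> P (vL (vL v))"
     "\<And>e w. e \<in> hE K \<Longrightarrow> w \<in> hV (hlab K e) \<Longrightarrow> w \<notin> set (hsrc (hlab K e)) \<Longrightarrow> P (vL (vR e w))"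
     "\<And>e f u. e \<in> hE K \<Longrightarrow> f \<in> hE (hlab K e) \<Longrightarrow> u \<in> hV (hlab (hlab K e) f) \<Longrightarrow>
        u \<notin> set (hsrc (hlab (hlab K e) f)) \<Longrightarrow> P (vR (prod_encode (e, f)) u)" for a P
    using that(1) unfolding V1 using that(2-4) by blast
  have c2: "P a" if "a \<in> hV (flatten K')" "\<And>v. v \<in> hV K \<Longrightarrow> P (vL v)"
     "\<And>e w. e \<in> hE K \<Longrightarrow> w \<in> hV (hlab K e) \<Longrightarrow> w \<notin> set (hsrc (hlab K e)) \<Longrightarrow> P (vR e (vL w))"
     "\<And>e f u. e \<in> hE K \<Longrightarrow> f \<in> hE (hlab K e) \<Longrightarrow> u \<in> hV (hlab (hlab K e) f) \<Longrightarrow>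
        u \<notin> set (hsrc (hlab (hlab K e) f)) \<Longrightarrow> P (vR e (vR f u))" for a P
    using that(1) unfolding V2 using that(2-4) by blast
  have bb1: "bij_betw \<Phi> (hV (flatten (flatten K))) (hV (flatten K'))"
  proof (rule bij_betw_byWitness[where f' = "\<Phi>'"])
    show "\<forall>a\<in>hV (flatten (flatten K)). \<Phi>' (\<Phi> a) = a" by (intro ballI, erule c1) simp_all
    show "\<forall>a\<in>hV (flatten K'). \<Phi> (\<Phi>' a) = a" by (intro ballI, erule c2) simp_all
    show "\<Phi> ` hV (flatten (flatten K)) \<subseteq> hV (flatten K')" by (intro image_subsetI, erule c1) (auto simp: V2)
    show "\<Phi>' ` hV (flatten K') \<subseteq> hV (flatten (flatten K))" by (intro image_subsetI, erule c2) (simp_all add: V1; blast)+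
  qed
  have bb2: "bij_betw \<Psi> (hE (flatten (flatten K))) (hE (flatten K'))"
  proof (rule bij_betw_byWitness[where f' = "\<Psi>'"])
    show "\<forall>a\<in>hE (flatten (flatten K)). \<Psi>' (\<Psi> a) = a" unfolding E1 by fastforce
    show "\<forall>a\<in>hE (flatten K'). \<Psi> (\<Psi>' a) = a" unfolding E2 by fastforce
    show "\<Psi> ` hE (flatten (flatten K)) \<subseteq> hE (flatten K')" unfolding E1 E2 by fastforce
    show "\<Psi>' ` hE (flatten K') \<subseteq> hE (flatten (flatten K))" unfolding E1 E2 by fastforce
  qed
  have fv: "\<Phi> (fl_vmap (flatten K) (prod_encode (e, f)) u) = fl_vmap K' e (fl_vmap (hlab K e) f u)"
    if e: "e \<in> hE K" and f: "f \<in> hE (hlab K e)" and u: "u \<in> hV (hlab (hlab K e) f)" for e f u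
  proof -
    define Ke where "Ke = hlab K e"
    define Kef where "Kef = hlab Ke f"
    have wKe: "wf_hg (HH C ar) hg_ar Ke" using wfD(5)[OF wf e] by (simp add: Ke_def)
    have fK: "f \<in> hE Ke" using f by (simp add: Ke_def)
    have wKef: "wf_hg C ar Kef" using wfD(5)[OF wKe fK] by (simp add: Kef_def)
    show ?thesis
    proof (cases "u \<in> set (hsrc Kef)")
      case False
      have "vR f u \<notin> set (hsrc (hlab K' e))" by auto
      then show ?thesis using False by (simp add: fl_vmap_nsrc Ke_def[symmetric] Kef_def[symmetric])
    next
      case True
      define j where "j = src_index (hsrc Kef) u"
      have j: "j < length (hinc Ke f)"
        using src_index[OF wfD(3)[OF wKef] True] wfD(8)[OF wKe fK] by (simp add: hg_ar_def j_def Kef_def)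
      define w where "w = hinc Ke f ! j"
      have w: "w \<in> hV Ke" using wfD(7)[OF wKe fK] j by (auto simp: w_def)
      have lhs: "fl_vmap (flatten K) (prod_encode (e, f)) u = vL (fl_vmap K e w)"
        using True j by (simp add: fl_vmap_src Ke_def[symmetric] Kef_def[symmetric] j_def[symmetric] w_def)
      have rhs1: "fl_vmap (hlab K e) f u = vL w"
        using True by (simp add: fl_vmap_src Ke_def[symmetric] Kef_def[symmetric] j_def[symmetric] w_def)
      show ?thesis
      proof (cases "w \<in> set (hsrc Ke)")
        case True
        have "src_index (map vL (hsrc Ke)) (vL w) = src_index (hsrc Ke) w"
          by (rule src_index_map) (use True wfD(3)[OF wKe] in auto)
        then show ?thesis using True lhs rhs1 by (simp add: fl_vmap_src Ke_def[symmetric])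
      next
        case False
        then have "vL w \<notin> set (hsrc (hlab K' e))" by (auto simp: Ke_def)
        then show ?thesis using False lhs rhs1 by (simp add: fl_vmap_nsrc Ke_def[symmetric])
      qed
    qed
  qed
  have inc: "\<forall>x\<in>hE (flatten (flatten K)). hlab (flatten K') (\<Psi> x) = hlab (flatten (flatten K)) x \<and>
      hinc (flatten K') (\<Psi> x) = map \<Phi> (hinc (flatten (flatten K)) x)"
  proof
    fix x assume "x \<in> hE (flatten (flatten K))"
    then obtain e f g where x: "x = prod_encode (prod_encode (e, f), g)" "e \<in> hE K" "f \<in> hE (hlab K e)"
      "g \<in> hE (hlab (hlab K e) f)" unfolding E1 by blast
    have wKe: "wf_hg (HH C ar) hg_ar (hlab K e)" using wfD(5)[OF wf x(2)] by simp
    have wKef: "wf_hg C ar (hlab (hlab K e) f)" using wfD(5)[OF wKe x(3)] by simp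
    have "set (hinc (hlab (hlab K e) f) g) \<subseteq> hV (hlab (hlab K e) f)" using wfD(7)[OF wKef x(4)] .
    then show "hlab (flatten K') (\<Psi> x) = hlab (flatten (flatten K)) x \<and>
      hinc (flatten K') (\<Psi> x) = map \<Phi> (hinc (flatten (flatten K)) x)"
      using x fv[OF x(2) x(3)] by (auto simp: subset_iff)
  qed
  have src: "hsrc (flatten K') = map \<Phi> (hsrc (flatten (flatten K)))" by simp
  show ?thesis unfolding hg_iso_def K'_def[symmetric]
    apply (rule exI[of _ \<Phi>], rule exI[of _ \<Psi>])
    using bb1 bb2 inc src by blast
qed



lemma R_facts:
  assumes "ranked_equiv S ar R"
  shows R_HH: "\<And>G G'. (G, G') \<in> R \<Longrightarrow> wf_hg S ar G \<and> wf_hg S ar G'"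
    and R_refl: "\<And>G. wf_hg S ar G \<Longrightarrow> (G, G) \<in> R"
    and R_sym: "\<And>G G'. (G, G') \<in> R \<Longrightarrow> (G', G) \<in> R"
    and R_trans: "\<And>G1 G2 G3. (G1, G2) \<in> R \<Longrightarrow> (G2, G3) \<in> R \<Longrightarrow> (G1, G3) \<in> R"
    and R_iso: "\<And>G G'. wf_hg S ar G \<Longrightarrow> hg_iso G G' \<Longrightarrow> (G, G') \<in> R"
    and R_ar: "\<And>G G'. (G, G') \<in> R \<Longrightarrow> hg_ar G = hg_ar G'"
proof -
  have e: "equiv (HH S ar) R" and i: "\<forall>G\<in>HH S ar. \<forall>G'. hg_iso G G' \<longrightarrow> (G, G') \<in> R"
    and a: "\<forall>G G'. (G, G') \<in> R \<longrightarrow> hg_ar G = hg_ar G'" using assms unfolding ranked_equiv_def by auto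
  show "\<And>G G'. (G, G') \<in> R \<Longrightarrow> wf_hg S ar G \<and> wf_hg S ar G'"
    using e unfolding equiv_def refl_on_def by auto
  show "\<And>G. wf_hg S ar G \<Longrightarrow> (G, G) \<in> R" using e unfolding equiv_def refl_on_def by auto
  show "\<And>G G'. (G, G') \<in> R \<Longrightarrow> (G', G) \<in> R" using e unfolding equiv_def sym_def by blast
  show "\<And>G1 G2 G3. (G1, G2) \<in> R \<Longrightarrow> (G2, G3) \<in> R \<Longrightarrow> (G1, G3) \<in> R"
    using e unfolding equiv_def trans_def by blast
  show "\<And>G G'. wf_hg S ar G \<Longrightarrow> hg_iso G G' \<Longrightarrow> (G, G') \<in> R" using i by simp
  show "\<And>G G'. (G, G') \<in> R \<Longrightarrow> hg_ar G = hg_ar G'" using a by blast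
qed

lemma flatten_restrict:
  assumes "set q \<subseteq> {..<length s'}"
  shows "hg_restrict q (flatten (K\<lparr>hsrc := s'\<rparr>)) = flatten (K\<lparr>hsrc := map (\<lambda>i. s' ! i) q\<rparr>)"
proof -
  have "fl_vmap (K\<lparr>hsrc := s'\<rparr>) = fl_vmap (K\<lparr>hsrc := map (\<lambda>i. s' ! i) q\<rparr>)"
    by (rule fl_vmap_cong) simp_all
  then show ?thesis using assms by (simp add: hg_restrict_def flatten_def subset_iff)
qed

lemma wf_del_edge: "wf_hg C ar K \<Longrightarrow> wf_hg C ar (del_edge K e)"
  unfolding wf_hg_def by auto

lemma fresh_R:
  assumes RE: "ranked_equiv S ar R" and HR: "HR_compatible S ar R" and GG: "(G, G') \<in> R"
  shows "(hg_fresh G m, hg_fresh G' m) \<in> R"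
proof (induction m)
  case 0 then show ?case using GG by simp
next
  case (Suc m)
  have add: "(hg_addv (hg_fresh G m), hg_addv (hg_fresh G' m)) \<in> R"
    using HR Suc unfolding HR_compatible_def by blast
  have w: "wf_hg S ar G" "wf_hg S ar G'" using R_HH[OF RE GG] by auto
  have n1: "fb G + m \<notin> hV (hg_fresh G m)" using fb_less[OF wfD(1)[OF w(1)]] by auto
  have n2: "fb G' + m \<notin> hV (hg_fresh G' m)" using fb_less[OF wfD(1)[OF w(2)]] by auto
  have i1: "(hg_addv (hg_fresh G m), hg_fresh G (Suc m)) \<in> R"
    unfolding fresh_Suc by (rule R_iso[OF RE _ addv_iso[OF n1]]) (use R_HH[OF RE add] in blast)
  have i2: "(hg_addv (hg_fresh G' m), hg_fresh G' (Suc m)) \<in> R"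
    unfolding fresh_Suc by (rule R_iso[OF RE _ addv_iso[OF n2]]) (use R_HH[OF RE add] in blast)
  show ?case using R_trans[OF RE R_trans[OF RE R_sym[OF RE i1] add] i2] .
qed



lemma cong_allsrc:
  assumes RE: "ranked_equiv S ar R" and HR: "HR_compatible S ar R"
  shows "\<forall>K K'. card (hE K) = n \<longrightarrow> wf_hg (HH S ar) hg_ar K \<longrightarrow> wf_hg (HH S ar) hg_ar K' \<longrightarrow>
     hV K' = hV K \<longrightarrow> hE K' = hE K \<longrightarrow> hinc K' = hinc K \<longrightarrow> hsrc K' = hsrc K \<longrightarrow>
     set (hsrc K) = hV K \<longrightarrow> (\<forall>e\<in>hE K. (hlab K e, hlab K' e) \<in> R) \<longrightarrow> (flatten K, flatten K') \<in> R"
proof (induction n)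
  case 0
  show ?case
  proof (intro allI impI)
    fix K K' :: "'a shg shg"
    assume c: "card (hE K) = 0" and wK: "wf_hg (HH S ar) hg_ar K" and wK': "wf_hg (HH S ar) hg_ar K'"
      and s: "hV K' = hV K" "hE K' = hE K" "hinc K' = hinc K" "hsrc K' = hsrc K"
    have E: "hE K = {}" using c wfD(2)[OF wK] by simp
    have "hg_iso (flatten K) (flatten K')" by (rule iso_id) (use E s in auto)
    then show "(flatten K, flatten K') \<in> R" by (rule R_iso[OF RE wf_flatten[OF wK]])
  qed
next
  case (Suc n)
  show ?case
  proof (intro allI impI)
    fix K K' :: "'a shg shg"
    assume c: "card (hE K) = Suc n" and wK: "wf_hg (HH S ar) hg_ar K" and wK': "wf_hg (HH S ar) hg_ar K'"
      and s: "hV K' = hV K" "hE K' = hE K" "hinc K' = hinc K" "hsrc K' = hsrc K"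
      and all: "set (hsrc K) = hV K" and rel: "\<forall>e\<in>hE K. (hlab K e, hlab K' e) \<in> R"
    obtain e where e: "e \<in> hE K" using c by fastforce
    have e': "e \<in> hE K'" using e s by simp
    define ws where "ws = hinc K e"
    define rest where "rest = filter (\<lambda>v. v \<notin> set ws) (hsrc K)"
    define s' where "s' = ws @ rest"
    define K1 where "K1 = K\<lparr>hsrc := s'\<rparr>"
    define K1' where "K1' = K'\<lparr>hsrc := s'\<rparr>"
    define q where "q = map (src_index s') (hsrc K)"
    have wsV: "set ws \<subseteq> hV K" using wfD(7)[OF wK e] by (simp add: ws_def)
    have ds: "distinct s'" using wfD(3)[OF wK] wfD(6)[OF wK e] by (auto simp: s'_def rest_def ws_def)
    have ss: "set s' = set (hsrc K)" using wsV all by (auto simp: s'_def rest_def)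
    have wK1: "wf_hg (HH S ar) hg_ar K1" using wK ds ss unfolding wf_hg_def K1_def by auto
    have wK1': "wf_hg (HH S ar) hg_ar K1'" using wK' ds ss s unfolding wf_hg_def K1'_def by auto
    have qs: "set q \<subseteq> {..<length s'}" using src_index[OF ds] ss by (auto simp: q_def)
    have qd: "distinct q" unfolding q_def
      by (rule distinct_map[THEN iffD2]) (metis ds ss inj_onI src_index wfD(3)[OF wK])
    have qm: "map (\<lambda>i. s' ! i) q = hsrc K" using src_index[OF ds] ss by (auto simp: q_def intro: map_idI)
    have fK: "flatten K = hg_restrict q (flatten K1)"
      using flatten_restrict[OF qs, of K] qm by (simp add: K1_def)
    have KK: "K'\<lparr>hsrc := hsrc K\<rparr> = K'" by (simp add: s(4)[symmetric])
    have fK': "flatten K' = hg_restrict q (flatten K1')"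
      using flatten_restrict[OF qs, of K'] qm KK by (simp add: K1'_def)
    define Lab where "Lab = hlab K e"
    define Lab' where "Lab' = hlab K' e"
    have LL: "(Lab, Lab') \<in> R" using rel e by (simp add: Lab_def Lab'_def)
    have i1: "hg_iso (hg_par (flatten (del_edge K1 e)) (hg_fresh Lab (length rest))) (flatten K1)"
      using flatten_split[OF wK1, of e rest] e by (simp add: K1_def Lab_def s'_def ws_def)
    have i2: "hg_iso (hg_par (flatten (del_edge K1' e)) (hg_fresh Lab' (length rest))) (flatten K1')"
      using flatten_split[OF wK1', of e rest] e s by (simp add: K1'_def Lab'_def s'_def ws_def)
    have IH: "(flatten (del_edge K1 e), flatten (del_edge K1' e)) \<in> R"
      using Suc.IH[rule_format, of "del_edge K1 e" "del_edge K1' e"] c e wfD(2)[OF wK]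
        wf_del_edge[OF wK1] wf_del_edge[OF wK1'] ss all rel s by (simp add: K1_def K1'_def)
    have FR: "(hg_fresh Lab (length rest), hg_fresh Lab' (length rest)) \<in> R" by (rule fresh_R[OF RE HR LL])
    have arL: "hg_ar Lab = length ws" using wfD(8)[OF wK e] by (simp add: Lab_def ws_def)
    have par: "(hg_par (flatten (del_edge K1 e)) (hg_fresh Lab (length rest)),
                hg_par (flatten (del_edge K1' e)) (hg_fresh Lab' (length rest))) \<in> R"
      using HR IH FR arL unfolding HR_compatible_def by (auto simp: K1_def s'_def hg_ar_def)
    have pw: "wf_hg S ar (hg_par (flatten (del_edge K1 e)) (hg_fresh Lab (length rest)))"
      "wf_hg S ar (hg_par (flatten (del_edge K1' e)) (hg_fresh Lab' (length rest)))"
      using R_HH[OF RE par] by auto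
    have "(flatten K1, flatten K1') \<in> R"
      using R_trans[OF RE R_trans[OF RE R_sym[OF RE R_iso[OF RE pw(1) i1]] par] R_iso[OF RE pw(2) i2]] .
    then have "(hg_restrict q (flatten K1), hg_restrict q (flatten K1')) \<in> R"
      using HR qd qs unfolding HR_compatible_def by (auto simp: K1_def hg_ar_def)
    then show "(flatten K, flatten K') \<in> R" using fK fK' by simp
  qed
qed

lemma cong_HR:
  assumes RE: "ranked_equiv S ar R" and HR: "HR_compatible S ar R"
    and wK: "wf_hg (HH S ar) hg_ar K" and wK': "wf_hg (HH S ar) hg_ar K'"
    and s: "hV K' = hV K" "hE K' = hE K" "hinc K' = hinc K" "hsrc K' = hsrc K"
    and rel: "\<forall>e\<in>hE K. (hlab K e, hlab K' e) \<in> R"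
  shows "(flatten K, flatten K') \<in> R"
proof -
  define s' where "s' = hsrc K @ sorted_list_of_set (hV K - set (hsrc K))"
  define q where "q = [0..<length (hsrc K)]"
  have ds: "distinct s'" using wfD(3)[OF wK] wfD(1)[OF wK] by (simp add: s'_def)
  have ss: "set s' = hV K" using wfD(4)[OF wK] wfD(1)[OF wK] by (auto simp: s'_def)
  have qs: "set q \<subseteq> {..<length s'}" by (auto simp: q_def s'_def)
  have qd: "distinct q" by (simp add: q_def)
  have qm: "map (\<lambda>i. s' ! i) q = hsrc K" by (rule nth_equalityI) (auto simp: q_def s'_def nth_append)
  have wK1: "wf_hg (HH S ar) hg_ar (K\<lparr>hsrc := s'\<rparr>)" using wK ds ss unfolding wf_hg_def by auto
  have wK1': "wf_hg (HH S ar) hg_ar (K'\<lparr>hsrc := s'\<rparr>)" using wK' ds ss s unfolding wf_hg_def by auto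
  have "(flatten (K\<lparr>hsrc := s'\<rparr>), flatten (K'\<lparr>hsrc := s'\<rparr>)) \<in> R"
    using cong_allsrc[OF RE HR, rule_format, OF refl wK1 wK1'] s ss rel by simp
  then have "(hg_restrict q (flatten (K\<lparr>hsrc := s'\<rparr>)), hg_restrict q (flatten (K'\<lparr>hsrc := s'\<rparr>))) \<in> R"
    using HR qd qs unfolding HR_compatible_def by (auto simp: hg_ar_def)
  moreover have KK: "K'\<lparr>hsrc := hsrc K\<rparr> = K'" by (simp add: s(4)[symmetric])
  ultimately show ?thesis using flatten_restrict[OF qs, of K] flatten_restrict[OF qs, of K'] qm by simp
qed



lemma wf_addv: "wf_hg C ar G \<Longrightarrow> wf_hg C ar (hg_addv G)"
  unfolding wf_hg_def hg_addv_def by (auto simp: distinct_map)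

lemma wf_restrict: "wf_hg C ar G \<Longrightarrow> distinct fs \<Longrightarrow> set fs \<subseteq> {..<length (hsrc G)} \<Longrightarrow> wf_hg C ar (hg_restrict fs G)"
  unfolding wf_hg_def hg_restrict_def by (auto simp: distinct_map inj_on_def subset_iff nth_eq_iff_index_eq)

lemma wf_par:
  assumes wG: "wf_hg C ar G" and wH: "wf_hg C ar H" and len: "length (hsrc G) = length (hsrc H)"
  shows "wf_hg C ar (hg_par G H)"
proof -
  have pv: "par_vmap G H v = (if v \<in> set (hsrc H) then vL (hsrc G ! src_index (hsrc H) v) else sum_encode (Inr v))" for v
    by (simp add: par_vmap_def)
  have inj: "inj_on (par_vmap G H) (hV H)"
  proof
    fix v w assume v: "v \<in> hV H" and w: "w \<in> hV H" and eq: "par_vmap G H v = par_vmap G H w"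
    show "v = w"
    proof (cases "v \<in> set (hsrc H)"; cases "w \<in> set (hsrc H)")
      assume a: "v \<in> set (hsrc H)" "w \<in> set (hsrc H)"
      have "src_index (hsrc H) v < length (hsrc G)" "src_index (hsrc H) w < length (hsrc G)"
        using src_index[OF wfD(3)[OF wH] a(1)] src_index[OF wfD(3)[OF wH] a(2)] len by auto
      moreover have "hsrc G ! src_index (hsrc H) v = hsrc G ! src_index (hsrc H) w" using eq a by (simp add: pv)
      ultimately have "src_index (hsrc H) v = src_index (hsrc H) w" using nth_eq_iff_index_eq[OF wfD(3)[OF wG]] by blast
      then show ?thesis using src_index[OF wfD(3)[OF wH] a(1)] src_index[OF wfD(3)[OF wH] a(2)] by metis
    qed (use eq in \<open>simp_all add: pv\<close>)
  qed
  have img: "par_vmap G H v \<in> hV (hg_par G H)" if v: "v \<in> hV H" for v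
  proof (cases "v \<in> set (hsrc H)")
    case True
    have "src_index (hsrc H) v < length (hsrc G)" using src_index[OF wfD(3)[OF wH] True] len by auto
    then have "hsrc G ! src_index (hsrc H) v \<in> hV G" using wfD(4)[OF wG] nth_mem by blast
    then show ?thesis using True by (simp add: pv)
  qed (use v in \<open>simp add: pv\<close>)
  have edges: "\<forall>x\<in>hE (hg_par G H). hlab (hg_par G H) x \<in> C \<and> distinct (hinc (hg_par G H) x) \<and>
      set (hinc (hg_par G H) x) \<subseteq> hV (hg_par G H) \<and> length (hinc (hg_par G H) x) = ar (hlab (hg_par G H) x)"
  proof
    fix x assume "x \<in> hE (hg_par G H)"
    then consider (a) e where "x = vL e" "e \<in> hE G" | (b) e where "x = sum_encode (Inr e)" "e \<in> hE H" by auto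
    then show "hlab (hg_par G H) x \<in> C \<and> distinct (hinc (hg_par G H) x) \<and>
      set (hinc (hg_par G H) x) \<subseteq> hV (hg_par G H) \<and> length (hinc (hg_par G H) x) = ar (hlab (hg_par G H) x)"
    proof cases
      case a then show ?thesis using wfD(5-8)[OF wG a(2)] by (auto simp: distinct_map)
    next
      case b then show ?thesis using wfD(5-8)[OF wH b(2)] img inj
        by (auto simp: distinct_map inj_on_subset)
    qed
  qed
  have "finite (hV (hg_par G H))" using wfD(1)[OF wG] wfD(1)[OF wH] by simp
  moreover have "finite (hE (hg_par G H))" using wfD(2)[OF wG] wfD(2)[OF wH] by simp
  moreover have "distinct (hsrc (hg_par G H))" using wfD(3)[OF wG] by (simp add: distinct_map)
  moreover have "set (hsrc (hg_par G H)) \<subseteq> hV (hg_par G H)" using wfD(4)[OF wG] by auto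
  ultimately show ?thesis unfolding wf_hg_def using edges by blast
qed

lemma flatten_one:
  assumes wf: "wf_hg (HH C ar) hg_ar K" and E: "hE K = {e}" and s: "hsrc K = hinc K e @ rest"
    and V: "hV K = set (hsrc K)"
  shows "hg_iso (hg_fresh (hlab K e) (length rest)) (flatten K)"
proof -
  have e: "e \<in> hE K" using E by simp
  have i1: "hg_iso (hg_par (flatten (del_edge K e)) (hg_fresh (hlab K e) (length rest))) (flatten K)"
    by (rule flatten_split[OF wf e s])
  have wl: "wf_hg C ar (hlab K e)" using wfD(5)[OF wf e] by simp
  have "hg_iso (hg_fresh (hlab K e) (length rest)) (hg_par (flatten (del_edge K e)) (hg_fresh (hlab K e) (length rest)))"
  proof (rule par_D[OF wf_fresh[OF wl]])
    show "hE (flatten (del_edge K e)) = {}" using E by simp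
    show "set (hsrc (flatten (del_edge K e))) = hV (flatten (del_edge K e))" using E V by simp
    show "distinct (hsrc (flatten (del_edge K e)))" using wfD(3)[OF wf] by (simp add: distinct_map)
    show "length (hsrc (flatten (del_edge K e))) = length (hsrc (hg_fresh (hlab K e) (length rest)))"
      using s wfD(8)[OF wf e] by (simp add: hg_ar_def)
  qed
  then show ?thesis using i1 iso_trans by blast
qed

lemma Inl_Plus[simp]: "Inl x \<in> A <+> B \<longleftrightarrow> x \<in> A" by auto

lemma wf_poly:
  assumes "wf_hg (HH S ar <+> UNIV) (case_sum hg_ar arX) t" and "valuation S ar arX \<eta>"
  shows "wf_hg (HH S ar) hg_ar (relabel (case_sum id \<eta>) t)"
  using assms unfolding wf_hg_def valuation_def by (auto split: sum.splits)

lemma HR_congruence: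
  assumes RE: "ranked_equiv S ar R" and HR: "HR_compatible S ar R"
  shows "congruence S ar R"
  unfolding congruence_def
proof (intro conjI allI impI)
  show "ranked_equiv S ar R" by (rule RE)
  fix arX t \<eta> \<eta>'
  assume t: "wf_hg (HH S ar <+> UNIV) (case_sum hg_ar arX) t" and v: "valuation S ar arX \<eta>" and v': "valuation S ar arX \<eta>'"
    and rel: "\<forall>x. (\<eta> x, \<eta>' x) \<in> R"
  show "(poly_op t \<eta>, poly_op t \<eta>') \<in> R" unfolding poly_op_def
  proof (rule cong_HR[OF RE HR wf_poly[OF t v] wf_poly[OF t v']])
    show "\<forall>e\<in>hE (relabel (case_sum id \<eta>) t). (hlab (relabel (case_sum id \<eta>) t) e, hlab (relabel (case_sum id \<eta>') t) e) \<in> R"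
    proof
      fix e assume e: "e \<in> hE (relabel (case_sum id \<eta>) t)"
      show "(hlab (relabel (case_sum id \<eta>) t) e, hlab (relabel (case_sum id \<eta>') t) e) \<in> R"
      proof (cases "hlab t e")
        case (Inl G)
        have "hlab t e \<in> HH S ar <+> UNIV" using wfD(5)[OF t] e by simp
        then have "wf_hg S ar G" using Inl by simp
        then show ?thesis using Inl R_refl[OF RE] by simp
      next
        case (Inr x) then show ?thesis using rel by simp
      qed
    qed
  qed simp_all
qed



lemma cong_poly:
  assumes "congruence S ar R" "wf_hg (HH S ar <+> UNIV) (case_sum hg_ar arX) t"
    "valuation S ar arX \<eta>" "valuation S ar arX \<eta>'" "\<forall>x. (\<eta> x, \<eta>' x) \<in> R"
  shows "(flatten (relabel (case_sum id \<eta>) t), flatten (relabel (case_sum id \<eta>') t)) \<in> R"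
  using assms unfolding congruence_def poly_op_def by blast

definition tpar :: "nat \<Rightarrow> ('s shg + nat) shg" where
  "tpar n = \<lparr>hV = {..<n}, hE = {0, 1}, hlab = \<lambda>e. Inr e, hinc = \<lambda>_. [0..<n], hsrc = [0..<n]\<rparr>"
definition tadd :: "nat \<Rightarrow> ('s shg + nat) shg" where
  "tadd n = \<lparr>hV = {..<Suc n}, hE = {0}, hlab = \<lambda>e. Inr e, hinc = \<lambda>_. [0..<n], hsrc = [0..<Suc n]\<rparr>"
definition tres :: "nat \<Rightarrow> nat list \<Rightarrow> ('s shg + nat) shg" where
  "tres n fs = \<lparr>hV = {..<n}, hE = {0}, hlab = \<lambda>e. Inr e, hinc = \<lambda>_. [0..<n], hsrc = fs\<rparr>"

lemma wf_tpar: "wf_hg (HH S ar <+> UNIV) (case_sum hg_ar (\<lambda>_. n)) (tpar n)"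
  by (auto simp: wf_hg_def tpar_def)
lemma wf_tadd: "wf_hg (HH S ar <+> UNIV) (case_sum hg_ar (\<lambda>_. n)) (tadd n)"
  by (auto simp: wf_hg_def tadd_def)
lemma wf_tres: "distinct fs \<Longrightarrow> set fs \<subseteq> {..<n} \<Longrightarrow> wf_hg (HH S ar <+> UNIV) (case_sum hg_ar (\<lambda>_. n)) (tres n fs)"
  by (auto simp: wf_hg_def tres_def)

lemma iso_par:
  assumes wG: "wf_hg S ar G" and wH: "wf_hg S ar H" and n: "hg_ar G = n" "hg_ar H = n"
  shows "hg_iso (hg_par G H) (flatten (relabel (case_sum id (\<lambda>x. if x = 0 then G else H)) (tpar n)))"
proof -
  define K where "K = relabel (case_sum id (\<lambda>x. if x = 0 then G else H)) (tpar n)"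
  have wK: "wf_hg (HH S ar) hg_ar K" unfolding K_def
    by (rule wf_poly[OF wf_tpar]) (use wG wH n in \<open>auto simp: valuation_def\<close>)
  have wK1: "wf_hg (HH S ar) hg_ar (del_edge K 1)" by (rule wf_del_edge[OF wK])
  have "hg_iso (hg_fresh (hlab (del_edge K 1) 0) (length ([]::nat list))) (flatten (del_edge K 1))"
    by (rule flatten_one[OF wK1]) (auto simp: K_def tpar_def)
  then have i1: "hg_iso G (flatten (del_edge K 1))" by (simp add: K_def tpar_def)
  have i2: "hg_iso (hg_par G H) (hg_par (flatten (del_edge K 1)) H)"
    by (rule par_iso1[OF i1 wH]) (use n in \<open>simp add: hg_ar_def\<close>)
  have "hg_iso (hg_par (flatten (del_edge K 1)) (hg_fresh (hlab K 1) (length ([]::nat list)))) (flatten K)"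
    by (rule flatten_split[OF wK]) (auto simp: K_def tpar_def)
  then have i3: "hg_iso (hg_par (flatten (del_edge K 1)) H) (flatten K)" by (simp add: K_def tpar_def)
  show ?thesis using iso_trans[OF i2 i3] by (simp add: K_def)
qed

lemma iso_add:
  assumes wG: "wf_hg S ar G" and n: "hg_ar G = n"
  shows "hg_iso (hg_addv G) (flatten (relabel (case_sum id (\<lambda>x. G)) (tadd n)))"
proof -
  define K where "K = relabel (case_sum id (\<lambda>x. G)) (tadd n)"
  have wK: "wf_hg (HH S ar) hg_ar K" unfolding K_def
    by (rule wf_poly[OF wf_tadd]) (use wG n in \<open>auto simp: valuation_def\<close>)
  have "hg_iso (hg_fresh (hlab K 0) (length [n])) (flatten K)"
    by (rule flatten_one[OF wK]) (auto simp: K_def tadd_def)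
  then have i1: "hg_iso (hg_fresh G 1) (flatten K)" by (simp add: K_def tadd_def)
  have "fb G \<notin> hV G" using fb_less[OF wfD(1)[OF wG]] by blast
  then have "hg_iso (hg_addv G) (G\<lparr>hV := hV G \<union> {fb G}, hsrc := hsrc G @ [fb G]\<rparr>)" by (rule addv_iso)
  moreover have eq: "hg_fresh G 1 = G\<lparr>hV := hV G \<union> {fb G}, hsrc := hsrc G @ [fb G]\<rparr>" by (simp add: hg_fresh_def)
  ultimately have "hg_iso (hg_addv G) (hg_fresh G 1)" by (simp only: eq)
  then show ?thesis using iso_trans i1 by (simp add: K_def)
qed

lemma iso_res:
  assumes wG: "wf_hg S ar G" and n: "hg_ar G = n" and fs: "distinct fs" "set fs \<subseteq> {..<n}"
  shows "hg_iso (hg_restrict fs G) (flatten (relabel (case_sum id (\<lambda>x. G)) (tres n fs)))"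
proof -
  define K where "K = relabel (case_sum id (\<lambda>x. G)) (tres n fs)"
  define K0 where "K0 = K\<lparr>hsrc := [0..<n]\<rparr>"
  have wK: "wf_hg (HH S ar) hg_ar K" unfolding K_def
    by (rule wf_poly[OF wf_tres[OF fs]]) (use wG n in \<open>auto simp: valuation_def\<close>)
  have wK0: "wf_hg (HH S ar) hg_ar K0" using wK n wG unfolding K0_def wf_hg_def
    by (auto simp: K_def tres_def hg_ar_def)
  have "hg_iso (hg_fresh (hlab K0 0) (length ([]::nat list))) (flatten K0)"
    by (rule flatten_one[OF wK0]) (auto simp: K0_def K_def tres_def)
  then have i1: "hg_iso G (flatten K0)" by (simp add: K0_def K_def tres_def)
  have i2: "hg_iso (hg_restrict fs G) (hg_restrict fs (flatten K0))"
    by (rule restrict_iso[OF i1]) (use fs n in \<open>simp add: hg_ar_def\<close>)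
  have "hg_restrict fs (flatten K0) = flatten (K\<lparr>hsrc := map (\<lambda>i. [0..<n] ! i) fs\<rparr>)"
    unfolding K0_def by (rule flatten_restrict) (use fs in simp)
  also have "map (\<lambda>i. [0..<n] ! i) fs = fs" using fs by (intro map_idI) auto
  also have "K\<lparr>hsrc := fs\<rparr> = K" by (simp add: K_def tres_def relabel_def)
  finally show ?thesis using i2 by (simp add: K_def)
qed

lemma congruence_HR:
  assumes C: "congruence S ar R"
  shows "HR_compatible S ar R"
proof -
  have RE: "ranked_equiv S ar R" using C unfolding congruence_def by blast
  have par: "(hg_par G H, hg_par G' H') \<in> R" if GG: "(G, G') \<in> R" and HH: "(H, H') \<in> R" and a: "hg_ar G = hg_ar H"
    for G G' H H'
  proof -
    define n where "n = hg_ar G"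
    have w: "wf_hg S ar G" "wf_hg S ar G'" "wf_hg S ar H" "wf_hg S ar H'" using R_HH[OF RE GG] R_HH[OF RE HH] by auto
    have ar: "hg_ar G = n" "hg_ar G' = n" "hg_ar H = n" "hg_ar H' = n"
      using a R_ar[OF RE GG] R_ar[OF RE HH] by (auto simp: n_def)
    have P: "(flatten (relabel (case_sum id (\<lambda>x. if x = 0 then G else H)) (tpar n)),
              flatten (relabel (case_sum id (\<lambda>x. if x = 0 then G' else H')) (tpar n))) \<in> R"
      by (rule cong_poly[OF C wf_tpar]) (use w ar GG HH in \<open>auto simp: valuation_def\<close>)
    have wp: "wf_hg S ar (hg_par G H)" "wf_hg S ar (hg_par G' H')"
      using wf_par[OF w(1) w(3)] wf_par[OF w(2) w(4)] ar by (auto simp: hg_ar_def)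
    show ?thesis using R_trans[OF RE R_trans[OF RE R_iso[OF RE wp(1) iso_par[OF w(1,3) ar(1,3)]] P]
        R_sym[OF RE R_iso[OF RE wp(2) iso_par[OF w(2,4) ar(2,4)]]]] .
  qed
  have add: "(hg_addv G, hg_addv G') \<in> R" if GG: "(G, G') \<in> R" for G G'
  proof -
    define n where "n = hg_ar G"
    have w: "wf_hg S ar G" "wf_hg S ar G'" using R_HH[OF RE GG] by auto
    have ar: "hg_ar G = n" "hg_ar G' = n" using R_ar[OF RE GG] by (auto simp: n_def)
    have P: "(flatten (relabel (case_sum id (\<lambda>x. G)) (tadd n)),
              flatten (relabel (case_sum id (\<lambda>x. G')) (tadd n))) \<in> R"
      by (rule cong_poly[OF C wf_tadd]) (use w ar GG in \<open>auto simp: valuation_def\<close>)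
    show ?thesis using R_trans[OF RE R_trans[OF RE R_iso[OF RE wf_addv[OF w(1)] iso_add[OF w(1) ar(1)]] P]
        R_sym[OF RE R_iso[OF RE wf_addv[OF w(2)] iso_add[OF w(2) ar(2)]]]] .
  qed
  have res: "(hg_restrict fs G, hg_restrict fs G') \<in> R"
    if GG: "(G, G') \<in> R" and fs: "distinct fs" "set fs \<subseteq> {..<hg_ar G}" for G G' fs
  proof -
    define n where "n = hg_ar G"
    have w: "wf_hg S ar G" "wf_hg S ar G'" using R_HH[OF RE GG] by auto
    have ar: "hg_ar G = n" "hg_ar G' = n" using R_ar[OF RE GG] by (auto simp: n_def)
    have fs': "set fs \<subseteq> {..<n}" using fs by (simp add: n_def)
    have P: "(flatten (relabel (case_sum id (\<lambda>x. G)) (tres n fs)),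
              flatten (relabel (case_sum id (\<lambda>x. G')) (tres n fs))) \<in> R"
      by (rule cong_poly[OF C wf_tres[OF fs(1) fs']]) (use w ar GG in \<open>auto simp: valuation_def\<close>)
    have wr: "wf_hg S ar (hg_restrict fs G)" "wf_hg S ar (hg_restrict fs G')"
      using wf_restrict[OF w(1) fs(1)] wf_restrict[OF w(2) fs(1)] fs' ar by (auto simp: hg_ar_def)
    show ?thesis using R_trans[OF RE R_trans[OF RE R_iso[OF RE wr(1) iso_res[OF w(1) ar(1) fs(1) fs']] P]
        R_sym[OF RE R_iso[OF RE wr(2) iso_res[OF w(2) ar(2) fs(1) fs']]]] .
  qed
  have emp: "(hg_empty, hg_empty) \<in> R" by (rule R_refl[OF RE]) (simp add: wf_hg_def hg_empty_def)
  have unit: "(hg_unit ar a, hg_unit ar a) \<in> R" if "a \<in> S" for a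
    by (rule R_refl[OF RE]) (use that in \<open>auto simp: wf_hg_def hg_unit_def\<close>)
  show ?thesis unfolding HR_compatible_def using par add res emp unit by blast
qed



lemma wf_relabel:
  assumes "wf_hg C ar K" "\<And>e. e \<in> hE K \<Longrightarrow> f (hlab K e) \<in> C' \<and> ar' (f (hlab K e)) = ar (hlab K e)"
  shows "wf_hg C' ar' (relabel f K)"
  using assms unfolding wf_hg_def by auto

lemma alg_to_cong:
  assumes alg: "H_algebra A arA \<pi>" and fin: "finite_per_arity A arA" and rec: "recognised_by_alg S ar L A arA \<pi>"
  shows "\<exists>R. congruence S ar R \<and> finite_index S ar R \<and> rel_recognises L R"
proof -
  obtain h F where hom: "H_hom S ar A arA \<pi> h" and L: "L = {G \<in> HH S ar. hg_ar G = 0 \<and> h G \<in> F}"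
    using rec unfolding recognised_by_alg_def by blast
  have h1: "\<And>G. wf_hg S ar G \<Longrightarrow> h G \<in> A \<and> arA (h G) = hg_ar G" using hom unfolding H_hom_def by simp
  have h2: "\<And>G G'. wf_hg S ar G \<Longrightarrow> hg_iso G G' \<Longrightarrow> h G = h G'" using hom unfolding H_hom_def by simp
  have h3: "\<And>K. wf_hg (HH S ar) hg_ar K \<Longrightarrow> h (flatten K) = \<pi> (relabel h K)" using hom unfolding H_hom_def by blast
  have a2: "\<And>G G'. wf_hg A arA G \<Longrightarrow> hg_iso G G' \<Longrightarrow> \<pi> G = \<pi> G'" using alg unfolding H_algebra_def by blast
  define R where "R = {(G, G'). wf_hg S ar G \<and> wf_hg S ar G' \<and> h G = h G'}"
  have RE: "ranked_equiv S ar R"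
    unfolding ranked_equiv_def
  proof (intro conjI allI impI ballI)
    show "equiv (HH S ar) R" unfolding equiv_def refl_on_def sym_def trans_def R_def by auto
    fix G G' assume "G \<in> HH S ar" "hg_iso G G'"
    then show "(G, G') \<in> R" using wf_iso h2 by (auto simp: R_def)
  next
    fix G G' assume "(G, G') \<in> R"
    then show "hg_ar G = hg_ar G'" using h1 by (auto simp: R_def) metis
  qed
  have C: "congruence S ar R" unfolding congruence_def
  proof (intro conjI allI impI)
    show "ranked_equiv S ar R" by (rule RE)
    fix arX t \<eta> \<eta>'
    assume t: "wf_hg (HH S ar <+> UNIV) (case_sum hg_ar arX) t" and v: "valuation S ar arX \<eta>" and v': "valuation S ar arX \<eta>'"
      and rel: "\<forall>x. (\<eta> x, \<eta>' x) \<in> R"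
    define K where "K = relabel (case_sum id \<eta>) t"
    define K' where "K' = relabel (case_sum id \<eta>') t"
    have wK: "wf_hg (HH S ar) hg_ar K" using wf_poly[OF t v] by (simp add: K_def)
    have wK': "wf_hg (HH S ar) hg_ar K'" using wf_poly[OF t v'] by (simp add: K'_def)
    have wA: "wf_hg A arA (relabel h K)" by (rule wf_relabel[OF wK]) (use h1 wfD(5)[OF wK] in auto)
    have "hg_iso (relabel h K) (relabel h K')"
    proof (rule iso_id)
      fix e assume e: "e \<in> hE (relabel h K)"
      show "hlab (relabel h K') e = hlab (relabel h K) e \<and> hinc (relabel h K') e = hinc (relabel h K) e"
      proof (cases "hlab t e")
        case (Inr x) then show ?thesis using rel by (simp add: K_def K'_def R_def)
      qed (simp add: K_def K'_def)
    qed (simp_all add: K_def K'_def)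
    then have "h (flatten K) = h (flatten K')" using h3[OF wK] h3[OF wK'] a2[OF wA] by simp
    then show "(poly_op t \<eta>, poly_op t \<eta>') \<in> R" using wf_flatten[OF wK] wf_flatten[OF wK']
      by (simp add: R_def poly_op_def K_def K'_def)
  qed
  have FI: "finite_index S ar R" unfolding finite_index_def
  proof
    fix n
    have "{G \<in> HH S ar. hg_ar G = n} // R \<subseteq> (\<lambda>a. {G. wf_hg S ar G \<and> h G = a}) ` {a \<in> A. arA a = n}"
    proof
      fix X assume "X \<in> {G \<in> HH S ar. hg_ar G = n} // R"
      then obtain G where G: "wf_hg S ar G" "hg_ar G = n" "X = R `` {G}" unfolding quotient_def by auto
      have "X = {G'. wf_hg S ar G' \<and> h G' = h G}" using G by (auto simp: R_def)
      then show "X \<in> (\<lambda>a. {G. wf_hg S ar G \<and> h G = a}) ` {a \<in> A. arA a = n}" using h1[OF G(1)] G by auto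
    qed
    moreover have "finite {a \<in> A. arA a = n}" using fin unfolding finite_per_arity_def by blast
    ultimately show "finite ({G \<in> HH S ar. hg_ar G = n} // R)" by (meson finite_imageI finite_subset)
  qed
  have RR: "rel_recognises L R" unfolding rel_recognises_def L R_def using h1 by auto metis
  show ?thesis using C FI RR by blast
qed



lemma relabel_flatten: "relabel f (flatten K) = flatten (relabel (relabel f) K)"
proof -
  have "fl_vmap (relabel (relabel f) K) = fl_vmap K" by (simp add: fl_vmap_def fun_eq_iff)
  then show ?thesis by (simp add: relabel_def flatten_def fun_eq_iff split: prod.splits)
qed

lemma relabel_comp: "relabel f (relabel g K) = relabel (f \<circ> g) K"
  by (simp add: relabel_def comp_assoc)

lemma relabel_iso: assumes "hg_iso K K'" shows "hg_iso (relabel f K) (relabel f K')"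
proof -
  from assms obtain \<phi> \<psi> where b1: "bij_betw \<phi> (hV K) (hV K')" and b2: "bij_betw \<psi> (hE K) (hE K')"
    and l: "\<forall>e\<in>hE K. hlab K' (\<psi> e) = hlab K e \<and> hinc K' (\<psi> e) = map \<phi> (hinc K e)"
    and s: "hsrc K' = map \<phi> (hsrc K)" unfolding hg_iso_def by blast
  show ?thesis unfolding hg_iso_def
    apply (rule exI[of _ \<phi>], rule exI[of _ \<psi>])
    using b1 b2 l s by simp
qed

lemma hg_ar_relabel[simp]: "hg_ar (relabel f G) = hg_ar G" by (simp add: hg_ar_def)

lemma cong_to_alg:
  fixes R :: "('s shg \<times> 's shg) set"
  assumes C: "congruence S ar R" and FI: "finite_index S ar R" and RR: "rel_recognises L R"
    and Lsub: "L \<subseteq> {G \<in> HH S ar. hg_ar G = 0}"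
  shows "\<exists>(A :: 's shg set set) arA \<pi>. H_algebra A arA \<pi> \<and> finite_per_arity A arA \<and> recognised_by_alg S ar L A arA \<pi>"
proof -
  have RE: "ranked_equiv S ar R" using C unfolding congruence_def by blast
  have HR: "HR_compatible S ar R" by (rule congruence_HR[OF C])
  have EQ: "equiv (HH S ar) R" using RE unfolding ranked_equiv_def by blast
  define A where "A = HH S ar // R"
  define rep :: "'s shg set \<Rightarrow> 's shg" where "rep X = (SOME G. G \<in> X)" for X
  define arA where "arA X = hg_ar (rep X)" for X
  define \<pi> where "\<pi> K = R `` {flatten (relabel rep K)}" for K
  define h where "h G = R `` {G}" for G
  have cls: "R `` {G} = R `` {G'} \<longleftrightarrow> (G, G') \<in> R" if "wf_hg S ar G" "wf_hg S ar G'" for G G'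
    using equiv_class_eq_iff[OF EQ] that by simp
  have hA: "h G \<in> A" if "wf_hg S ar G" for G using that by (simp add: h_def A_def quotientI)
  have repR: "(G, rep (h G)) \<in> R" if "wf_hg S ar G" for G
  proof -
    have "G \<in> R `` {G}" using equiv_class_self[OF EQ] that by simp
    then have "rep (h G) \<in> R `` {G}" unfolding rep_def h_def by (rule someI)
    then show ?thesis by simp
  qed
  have Adesc: "\<exists>G. wf_hg S ar G \<and> X = h G" if "X \<in> A" for X
    using that unfolding A_def quotient_def h_def by auto
  have repA: "wf_hg S ar (rep X) \<and> h (rep X) = X \<and> arA X = hg_ar (rep X)" if "X \<in> A" for X
  proof -
    from Adesc[OF that] obtain G where G: "wf_hg S ar G" "X = h G" by blast
    have r: "(G, rep X) \<in> R" using repR[OF G(1)] G by simp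
    then have w: "wf_hg S ar (rep X)" using R_HH[OF RE] by blast
    then show ?thesis using cls[OF G(1) w] r G by (simp add: h_def arA_def)
  qed
  have arh: "arA (h G) = hg_ar G" if "wf_hg S ar G" for G
    using R_ar[OF RE repR[OF that]] by (simp add: arA_def)
  have wrep: "wf_hg (HH S ar) hg_ar (relabel rep K)" if "wf_hg A arA K" for K
    by (rule wf_relabel[OF that]) (use repA wfD(5)[OF that] in auto)
  have a1: "\<pi> K \<in> A \<and> arA (\<pi> K) = hg_ar K" if K: "wf_hg A arA K" for K
  proof -
    have w: "wf_hg S ar (flatten (relabel rep K))" using wf_flatten[OF wrep[OF K]] .
    show ?thesis using hA[OF w] arh[OF w] by (simp add: \<pi>_def h_def hg_ar_def)
  qed
  have a2: "\<pi> K = \<pi> K'" if K: "wf_hg A arA K" and iso: "hg_iso K K'" for K K'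
  proof -
    have "hg_iso (flatten (relabel rep K)) (flatten (relabel rep K'))"
      by (rule flatten_iso[OF wrep[OF K] relabel_iso[OF iso]])
    then have "(flatten (relabel rep K), flatten (relabel rep K')) \<in> R"
      by (rule R_iso[OF RE wf_flatten[OF wrep[OF K]]])
    then show ?thesis unfolding \<pi>_def using R_HH[OF RE] cls by blast
  qed
  have a3: "\<pi> (hg_unit arA a) = a" if a: "a \<in> A" for a
  proof -
    define U where "U = relabel rep (hg_unit arA a)"
    have wu: "wf_hg A arA (hg_unit arA a)" using a by (auto simp: wf_hg_def hg_unit_def)
    have wU: "wf_hg (HH S ar) hg_ar U" using wrep[OF wu] by (simp add: U_def)
    have "hg_iso (hg_fresh (hlab U 0) (length ([]::nat list))) (flatten U)"
      by (rule flatten_one[OF wU]) (auto simp: U_def hg_unit_def)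
    then have "hg_iso (rep a) (flatten U)" by (simp add: U_def hg_unit_def)
    then have "(rep a, flatten U) \<in> R" using R_iso[OF RE] repA[OF a] by blast
    then have "R `` {flatten U} = R `` {rep a}" using cls R_HH[OF RE] by metis
    then show ?thesis using repA[OF a] by (simp add: \<pi>_def U_def h_def)
  qed
  have a4: "\<pi> (relabel \<pi> K) = \<pi> (flatten K)" if K: "wf_hg (HH A arA) hg_ar K" for K
  proof -
    define K2 where "K2 = relabel (relabel rep) K"
    have wK2: "wf_hg (HH (HH S ar) hg_ar) hg_ar K2" unfolding K2_def
      by (rule wf_relabel[OF K]) (use wrep wfD(5)[OF K] in auto)
    have i: "hg_iso (flatten (flatten K2)) (flatten (relabel flatten K2))" by (rule flatten_assoc[OF wK2])
    have e1: "relabel rep (flatten K) = flatten K2" by (simp add: relabel_flatten K2_def)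
    have e2: "relabel flatten K2 = relabel (flatten \<circ> relabel rep) K" by (simp add: K2_def relabel_comp)
    have e3: "relabel rep (relabel \<pi> K) = relabel (rep \<circ> \<pi>) K" by (simp add: relabel_comp)
    have wL: "wf_hg (HH S ar) hg_ar (relabel (flatten \<circ> relabel rep) K)"
      by (rule wf_relabel[OF K]) (use wrep wfD(5)[OF K] wf_flatten in \<open>auto intro!: wf_flatten\<close>)
    have wR: "wf_hg (HH S ar) hg_ar (relabel (rep \<circ> \<pi>) K)"
      by (rule wf_relabel[OF K]) (use a1 repA wfD(5)[OF K] in \<open>simp; metis\<close>)
    have c: "(flatten (relabel (flatten \<circ> relabel rep) K), flatten (relabel (rep \<circ> \<pi>) K)) \<in> R"
    proof (rule cong_HR[OF RE HR wL wR])
      show "\<forall>e\<in>hE (relabel (flatten \<circ> relabel rep) K).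
        (hlab (relabel (flatten \<circ> relabel rep) K) e, hlab (relabel (rep \<circ> \<pi>) K) e) \<in> R"
      proof
        fix e assume "e \<in> hE (relabel (flatten \<circ> relabel rep) K)"
        then have X: "wf_hg A arA (hlab K e)" using wfD(5)[OF K] by simp
        have "(flatten (relabel rep (hlab K e)), rep (\<pi> (hlab K e))) \<in> R"
          using repR[OF wf_flatten[OF wrep[OF X]]] by (simp add: \<pi>_def h_def)
        then show "(hlab (relabel (flatten \<circ> relabel rep) K) e, hlab (relabel (rep \<circ> \<pi>) K) e) \<in> R" by simp
      qed
    qed simp_all
    have i2: "(flatten (flatten K2), flatten (relabel (flatten \<circ> relabel rep) K)) \<in> R"
      using R_iso[OF RE wf_flatten[OF wf_flatten[OF wK2]] i] e2 by simp
    have "(flatten (relabel rep (flatten K)), flatten (relabel rep (relabel \<pi> K))) \<in> R"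
      using R_trans[OF RE i2 c] e1 e3 by simp
    then show ?thesis unfolding \<pi>_def using R_HH[OF RE] cls by metis
  qed
  have alg: "H_algebra A arA \<pi>" unfolding H_algebra_def using a1 a2 a3 a4 by blast
  have fpa: "finite_per_arity A arA" unfolding finite_per_arity_def
  proof
    fix n
    have "{a \<in> A. arA a = n} \<subseteq> {G \<in> HH S ar. hg_ar G = n} // R"
    proof
      fix X assume X: "X \<in> {a \<in> A. arA a = n}"
      then obtain G where G: "wf_hg S ar G" "X = h G" using Adesc by blast
      have "hg_ar G = n" using arh[OF G(1)] X G by simp
      then show "X \<in> {G \<in> HH S ar. hg_ar G = n} // R" using G by (auto simp: h_def quotient_def)
    qed
    then show "finite {a \<in> A. arA a = n}" using FI unfolding finite_index_def by (meson finite_subset)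
  qed
  have hom: "H_hom S ar A arA \<pi> h" unfolding H_hom_def
  proof (intro conjI ballI allI impI)
    fix G assume "G \<in> HH S ar"
    then show "h G \<in> A" "arA (h G) = hg_ar G" using hA arh by auto
  next
    fix G G' assume "G \<in> HH S ar" "hg_iso G G'"
    then show "h G = h G'" using R_iso[OF RE] cls R_HH[OF RE] by (metis HH_iff h_def)
  next
    fix K assume K: "wf_hg (HH S ar) hg_ar K"
    have wR: "wf_hg (HH S ar) hg_ar (relabel (rep \<circ> h) K)"
      by (rule wf_relabel[OF K]) (use hA repA wfD(5)[OF K] arh in auto)
    have "(flatten K, flatten (relabel (rep \<circ> h) K)) \<in> R"
    proof (rule cong_HR[OF RE HR K wR])
      show "\<forall>e\<in>hE K. (hlab K e, hlab (relabel (rep \<circ> h) K) e) \<in> R"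
        using repR wfD(5)[OF K] by simp
    qed simp_all
    then show "h (flatten K) = \<pi> (relabel h K)" unfolding \<pi>_def h_def relabel_comp
      using R_HH[OF RE] cls by metis
  qed
  have rec: "recognised_by_alg S ar L A arA \<pi>" unfolding recognised_by_alg_def
  proof (intro exI conjI)
    show "H_hom S ar A arA \<pi> h" by (rule hom)
    show "L = {G \<in> HH S ar. hg_ar G = 0 \<and> h G \<in> h ` L}"
    proof
      show "L \<subseteq> {G \<in> HH S ar. hg_ar G = 0 \<and> h G \<in> h ` L}" using Lsub by auto
      show "{G \<in> HH S ar. hg_ar G = 0 \<and> h G \<in> h ` L} \<subseteq> L"
      proof
        fix G assume "G \<in> {G \<in> HH S ar. hg_ar G = 0 \<and> h G \<in> h ` L}"
        then obtain G0 where G: "wf_hg S ar G" "G0 \<in> L" "h G = h G0" by auto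
        have "wf_hg S ar G0" using Lsub G(2) by auto
        then have "(G0, G) \<in> R" using cls[of G0 G] G by (simp add: h_def)
        then show "G \<in> L" using RR G(2) unfolding rel_recognises_def by blast
      qed
    qed
  qed
  show ?thesis using alg fpa rec by blast
qed


theorem theorem3p7:
  fixes S :: "'s set" and ar :: "'s \<Rightarrow> nat" and L :: "'s shg set"
  assumes "L \<subseteq> {G \<in> HH S ar. hg_ar G = 0}"
    and "\<forall>G\<in>L. \<forall>G'. hg_iso G G' \<longrightarrow> G' \<in> L"
  shows
    "((\<exists>(A :: 'b set) arA \<pi>. H_algebra A arA \<pi> \<and> finite_per_arity A arA \<and>
                             recognised_by_alg S ar L A arA \<pi>)
        \<longrightarrow> (\<exists>R. congruence S ar R \<and> finite_index S ar R \<and> rel_recognises L R))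
     \<and> ((\<exists>R. congruence S ar R \<and> finite_index S ar R \<and> rel_recognises L R)
        \<longrightarrow> (\<exists>(A :: 's shg set set) arA \<pi>. H_algebra A arA \<pi> \<and> finite_per_arity A arA \<and>
                             recognised_by_alg S ar L A arA \<pi>))
     \<and> ((\<exists>R. congruence S ar R \<and> finite_index S ar R \<and> rel_recognises L R)
        \<longleftrightarrow> (\<exists>R. ranked_equiv S ar R \<and> HR_compatible S ar R \<and> finite_index S ar R
                  \<and> rel_recognises L R))"
proof (intro conjI impI iffI)
  assume "\<exists>(A :: 'b set) arA \<pi>. H_algebra A arA \<pi> \<and> finite_per_arity A arA \<and> recognised_by_alg S ar L A arA \<pi>"
  then show "\<exists>R. congruence S ar R \<and> finite_index S ar R \<and> rel_recognises L R" using alg_to_cong by blast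
next
  assume "\<exists>R. congruence S ar R \<and> finite_index S ar R \<and> rel_recognises L R"
  then show "\<exists>(A :: 's shg set set) arA \<pi>. H_algebra A arA \<pi> \<and> finite_per_arity A arA \<and>
                             recognised_by_alg S ar L A arA \<pi>"
    using cong_to_alg[OF _ _ _ assms(1)] by blast
next
  assume "\<exists>R. congruence S ar R \<and> finite_index S ar R \<and> rel_recognises L R"
  then show "\<exists>R. ranked_equiv S ar R \<and> HR_compatible S ar R \<and> finite_index S ar R \<and> rel_recognises L R"
    using congruence_HR unfolding congruence_def by blast
next
  assume "\<exists>R. ranked_equiv S ar R \<and> HR_compatible S ar R \<and> finite_index S ar R \<and> rel_recognises L R"
  then show "\<exists>R. congruence S ar R \<and> finite_index S ar R \<and> rel_recognises L R"
    using HR_congruence by blast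
qed

end
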